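(* Let $G/H$ be a Riemannian normal naturally reductive homogeneous space (i.e. the induced metric on $G/H$, equivalently $\langle\cdot,\cdot\rangle|_{\mathfrak p}$, is positive definite) and let $u\colon\mathbb{R}\to\mathfrak p$ be bounded. Then the time-dependent vector field on $\mathbb{R}\times O(\mathfrak p)$ given by $$X(t,S)=\big(1,\;-\tfrac12\,\mathrm{pr}_{\mathfrak p}\circ\mathrm{ad}_{Su(t)}\circ S\big)$$ is complete.
   Context: Normal naturally reductive homogeneous space: $G$ Lie group with bi-invariant pseudo-Riemannian metric from an $\mathrm{Ad}_G$-invariant nondegenerate symmetric bilinear form $\langle\cdot,\cdot\rangle$ on $\mathfrak g$; $H$ closed subgroup with Lie algebra $\mathfrak h$, $\mathfrak p=\mathfrak h^\perp$ nondegenerate; $G/H$ carries the $G$-invariant metric making $\pi\colon G\to G/H$ a pseudo-Riemannian submersion. $\mathrm{pr}_{\mathfrak p}$ is the projection onto $\mathfrak p$ along $\mathfrak h$, $\mathrm{ad}_YZ=[Y,Z]$, and $O(\mathfrak p)$ is the group of linear isometries of $(\mathfrak p,\langle\cdot,\cdot\rangle|_{\mathfrak p})$. Complete means all integral curves are defined for all times. *)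

theory Defs
  imports "HOL-Analysis.Analysis"
begin

text \<open>Algebraic data of a normal naturally reductive homogeneous space G/H:
  the Lie algebra g (a finite dimensional real vector space 'g with bracket br),
  the Ad-invariant nondegenerate symmetric form B, and the subalgebra h.\<close>

definition lie_algebra :: "('g::real_vector \<Rightarrow> 'g \<Rightarrow> 'g) \<Rightarrow> bool" where
  "lie_algebra br \<longleftrightarrow> bilinear br \<and> (\<forall>x y. br x y = - br y x) \<and>
     (\<forall>x y z. br x (br y z) + br y (br z x) + br z (br x y) = 0)"

text \<open>Infinitesimal version of Ad_G-invariance: ad_x is skew w.r.t. B.\<close>
definition invariant_form :: "('g::real_vector \<Rightarrow> 'g \<Rightarrow> real) \<Rightarrow> ('g \<Rightarrow> 'g \<Rightarrow> 'g) \<Rightarrow> bool" where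
  "invariant_form B br \<longleftrightarrow> bilinear B \<and> (\<forall>x y. B x y = B y x) \<and>
     (\<forall>x. (\<forall>y. B x y = 0) \<longrightarrow> x = 0) \<and>
     (\<forall>x y z. B (br x y) z + B y (br x z) = 0)"

definition lie_subalgebra :: "'g::real_vector set \<Rightarrow> ('g \<Rightarrow> 'g \<Rightarrow> 'g) \<Rightarrow> bool" where
  "lie_subalgebra h br \<longleftrightarrow> subspace h \<and> (\<forall>x\<in>h. \<forall>y\<in>h. br x y \<in> h)"

definition pcomp :: "('g \<Rightarrow> 'g \<Rightarrow> real) \<Rightarrow> 'g set \<Rightarrow> 'g set" where
  "pcomp B h = {x. \<forall>y\<in>h. B x y = 0}"

definition prp :: "('g::real_vector \<Rightarrow> 'g \<Rightarrow> real) \<Rightarrow> 'g set \<Rightarrow> 'g \<Rightarrow> 'g" where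
  "prp B h x = (THE y. y \<in> pcomp B h \<and> x - y \<in> h)"

text \<open>The orthogonal group O(p). A linear isometry S of p is represented by the
  linear map S \<circ> pr_p on g (i.e. extended by zero on h).\<close>
definition Op :: "('g::real_vector \<Rightarrow> 'g \<Rightarrow> real) \<Rightarrow> 'g set \<Rightarrow> ('g \<Rightarrow> 'g) set" where
  "Op B h = {S. linear S \<and> (\<forall>x\<in>h. S x = 0) \<and> (\<forall>x\<in>pcomp B h. S x \<in> pcomp B h) \<and>
      (\<forall>x\<in>pcomp B h. \<forall>y\<in>pcomp B h. B (S x) (S y) = B x y)}"

text \<open>Second component of X(t,S) = (1, -1/2 pr_p \<circ> ad_{S u(t)} \<circ> S).\<close>
definition Xfield :: "('g::real_vector \<Rightarrow> 'g \<Rightarrow> real) \<Rightarrow> 'g set \<Rightarrow> ('g \<Rightarrow> 'g \<Rightarrow> 'g)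
     \<Rightarrow> (real \<Rightarrow> 'g) \<Rightarrow> real \<Rightarrow> ('g \<Rightarrow> 'g) \<Rightarrow> ('g \<Rightarrow> 'g)" where
  "Xfield B h br u t S = (\<lambda>x. - (1/2) *\<^sub>R prp B h (br (S (u t)) (S x)))"

text \<open>Integral curve (tau, S) : J \<rightarrow> R \<times> O(p) of X, in the Caratheodory
  (integral) sense, since u is only bounded measurable.\<close>
definition integral_curve :: "('g::real_normed_vector \<Rightarrow> 'g \<Rightarrow> real) \<Rightarrow> 'g set \<Rightarrow> ('g \<Rightarrow> 'g \<Rightarrow> 'g)
     \<Rightarrow> (real \<Rightarrow> 'g) \<Rightarrow> real set \<Rightarrow> (real \<Rightarrow> real) \<Rightarrow> (real \<Rightarrow> ('g \<Rightarrow> 'g)) \<Rightarrow> bool" where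
  "integral_curve B h br u J tau S \<longleftrightarrow>
     (\<forall>s\<in>J. S s \<in> Op B h) \<and>
     (\<forall>s\<in>J. (tau has_real_derivative 1) (at s)) \<and>
     (\<forall>a\<in>J. \<forall>b\<in>J. a \<le> b \<longrightarrow> (\<forall>x.
        ((\<lambda>r. Xfield B h br u (tau r) (S r) x) has_integral (S b x - S a x)) {a..b}))"

definition complete_X :: "('g::real_normed_vector \<Rightarrow> 'g \<Rightarrow> real) \<Rightarrow> 'g set \<Rightarrow> ('g \<Rightarrow> 'g \<Rightarrow> 'g)
     \<Rightarrow> (real \<Rightarrow> 'g) \<Rightarrow> bool" where
  "complete_X B h br u \<longleftrightarrow>
     (\<forall>t0 S0. S0 \<in> Op B h \<longrightarrow>
        (\<exists>tau S. integral_curve B h br u UNIV tau S \<and> tau 0 = t0 \<and> S 0 = S0)) \<and>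
     (\<forall>J tau S. is_interval J \<and> open J \<and> J \<noteq> {} \<and> integral_curve B h br u J tau S \<longrightarrow>
        (\<exists>tau' S'. integral_curve B h br u UNIV tau' S' \<and> (\<forall>s\<in>J. tau' s = tau s \<and> S' s = S s)))"

end

theory Submission
  imports Defs
begin

definition ival :: "real \<Rightarrow> real \<Rightarrow> (real \<Rightarrow> 'b::euclidean_space) \<Rightarrow> 'b" where
  "ival a t f = (if a \<le> t then integral {a..t} f else - integral {t..a} f)"

lemma ival_diff:
  fixes f :: "real \<Rightarrow> 'b::euclidean_space"
  assumes f: "\<And>c d. f integrable_on {c..d}" and ab: "a \<le> b"
  shows "ival s b f - ival s a f = integral {a..b} f"
proof (cases "s \<le> a")
  case True
  then show ?thesis using ab Henstock_Kurzweil_Integration.integral_combine[OF True ab f]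
    by (simp add: ival_def) (metis add_diff_cancel_left')
next
  case False
  show ?thesis
  proof (cases "s \<le> b")
    case True
    have "integral {a..s} f + integral {s..b} f = integral {a..b} f"
      using Henstock_Kurzweil_Integration.integral_combine[of a s b f] False True f by simp
    then show ?thesis using False True by (simp add: ival_def algebra_simps)
  next
    case F2: False
    have "integral {a..b} f + integral {b..s} f = integral {a..s} f"
      using Henstock_Kurzweil_Integration.integral_combine[of a b s f] False F2 ab f by simp
    then show ?thesis using False F2 ab by (simp add: ival_def algebra_simps)
  qed
qed

lemma ival_shift:
  fixes f :: "real \<Rightarrow> 'b::euclidean_space"
  assumes f: "\<And>c d. f integrable_on {c..d}"
  shows "ival s t f - ival s a f = ival a t f"
proof (cases "a \<le> t")
  case True
  then show ?thesis using ival_diff[OF f True, of s] by (simp add: ival_def)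
next
  case False
  then have "t \<le> a" by simp
  from ival_diff[OF f this, of s] False show ?thesis by (simp add: ival_def algebra_simps)
qed

lemma ival_same [simp]: "ival a a f = 0"
  by (simp add: ival_def)

lemma ival_norm_bound:
  fixes f :: "real \<Rightarrow> 'b::euclidean_space"
  assumes f: "f integrable_on {min s t..max s t}" and g: "g integrable_on {min s t..max s t}"
    and le: "\<And>r. r \<in> {min s t..max s t} \<Longrightarrow> norm (f r) \<le> g r"
  shows "norm (ival s t f) \<le> integral {min s t..max s t} g"
  using integral_norm_bound_integral[OF f g le]
  by (auto simp: ival_def min_def max_def split: if_splits)

lemma ival_bound_const:
  fixes f :: "real \<Rightarrow> 'b::euclidean_space"
  assumes f: "f integrable_on {min s t..max s t}"
    and le: "\<And>r. r \<in> {min s t..max s t} \<Longrightarrow> norm (f r) \<le> K"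
  shows "norm (ival s t f) \<le> K * \<bar>t - s\<bar>"
proof -
  have "norm (ival s t f) \<le> integral {min s t..max s t} (\<lambda>r. K)"
    by (rule ival_norm_bound[OF f _ le]) auto
  then show ?thesis by (auto simp: min_def max_def abs_if mult.commute)
qed

lemma ival_add:
  fixes f g :: "real \<Rightarrow> 'b::euclidean_space"
  assumes "\<And>c d. f integrable_on {c..d}" "\<And>c d. g integrable_on {c..d}"
  shows "ival s t (\<lambda>r. f r + g r) = ival s t f + ival s t g"
  using assms by (simp add: ival_def integral_add)

lemma ival_diff_fun:
  fixes f g :: "real \<Rightarrow> 'b::euclidean_space"
  assumes "\<And>c d. f integrable_on {c..d}" "\<And>c d. g integrable_on {c..d}"
  shows "ival s t (\<lambda>r. f r - g r) = ival s t f - ival s t g"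
  using assms by (simp add: ival_def integral_diff)

lemma ival_scale: "ival s t (\<lambda>r. c *\<^sub>R f r) = c *\<^sub>R ival s t f"
  by (simp add: ival_def)

lemma ival_linear:
  fixes f :: "real \<Rightarrow> 'b::euclidean_space" and g :: "'b \<Rightarrow> 'c::euclidean_space"
  assumes "\<And>c d. f integrable_on {c..d}" "bounded_linear g"
  shows "ival s t (\<lambda>r. g (f r)) = g (ival s t f)"
  using integral_linear[OF assms(1) assms(2)] assms(2)
  by (simp add: ival_def o_def linear_simps)

lemma ival_zero: "(\<And>r. f r = 0) \<Longrightarrow> ival s t f = 0"
proof -
  assume "\<And>r. f r = 0"
  then have "f = (\<lambda>_. 0)" by auto
  then show ?thesis by (simp add: ival_def)
qed

lemma ival_lip:
  fixes f :: "real \<Rightarrow> 'b::euclidean_space"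
  assumes f: "\<And>c d. f integrable_on {c..d}" and le: "\<And>r. norm (f r) \<le> K"
  shows "norm (ival s t f - ival s t' f) \<le> K * \<bar>t - t'\<bar>"
proof -
  have "ival s t f - ival s t' f = ival t' t f" by (rule ival_shift[OF f])
  also have "norm \<dots> \<le> K * \<bar>t - t'\<bar>"
    by (rule ival_bound_const[OF f le])
  finally show ?thesis .
qed

lemma int_pow:
  fixes c :: real
  shows "integral {min s t..max s t} (\<lambda>r. c * \<bar>r - s\<bar> ^ k) = c * \<bar>t - s\<bar> ^ Suc k / Suc k"
proof (cases "s \<le> t")
  case True
  have "((\<lambda>r. c * (r - s) ^ k) has_integral (c * (t - s) ^ Suc k / Suc k - c * (s - s) ^ Suc k / Suc k)) {s..t}"
  proof (rule fundamental_theorem_of_calculus[OF True])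
    fix r
    have "((\<lambda>r. (r - s) ^ Suc k) has_real_derivative real (Suc k) * (r - s) ^ k) (at r)"
      by (rule derivative_eq_intros refl | simp)+
    then have "((\<lambda>r. c * (r - s) ^ Suc k / Suc k) has_real_derivative c * (Suc k * (r - s) ^ k) / Suc k) (at r)"
      by (intro DERIV_cdivide DERIV_cmult)
    then have "((\<lambda>r. c * (r - s) ^ Suc k / Suc k) has_real_derivative c * (r - s) ^ k) (at r)"
      by (simp del: of_nat_Suc)
    then show "((\<lambda>r. c * (r - s) ^ Suc k / Suc k) has_vector_derivative c * (r - s) ^ k) (at r within {s..t})"
      by (simp add: has_real_derivative_iff_has_vector_derivative[symmetric] has_field_derivative_at_within)
  qed
  then have "((\<lambda>r. c * \<bar>r - s\<bar> ^ k) has_integral (c * (t - s) ^ Suc k / Suc k)) {s..t}"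
    by (subst has_integral_cong[where g="\<lambda>r. c * (r - s) ^ k"]) auto
  then have "integral {s..t} (\<lambda>r. c * \<bar>r - s\<bar> ^ k) = c * (t - s) ^ Suc k / Suc k"
    by (rule integral_unique)
  then show ?thesis using True by (simp del: integral_mult_right)
next
  case False
  have "((\<lambda>r. c * (s - r) ^ k) has_integral (- c * (s - s) ^ Suc k / Suc k - (- c * (s - t) ^ Suc k / Suc k))) {t..s}"
  proof (intro fundamental_theorem_of_calculus)
    fix r
    have "((\<lambda>r. (s - r) ^ Suc k) has_real_derivative - (real (Suc k) * (s - r) ^ k)) (at r)"
      by (rule derivative_eq_intros refl | simp)+
    then have "((\<lambda>r. - c * (s - r) ^ Suc k / Suc k) has_real_derivative - c * (- (Suc k * (s - r) ^ k)) / Suc k) (at r)"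
      by (intro DERIV_cdivide DERIV_cmult)
    then have "((\<lambda>r. - c * (s - r) ^ Suc k / Suc k) has_real_derivative c * (s - r) ^ k) (at r)"
      by (simp del: of_nat_Suc)
    then show "((\<lambda>r. - c * (s - r) ^ Suc k / Suc k) has_vector_derivative c * (s - r) ^ k) (at r within {t..s})"
      by (simp add: has_real_derivative_iff_has_vector_derivative[symmetric] has_field_derivative_at_within)
  qed (use False in auto)
  then have "((\<lambda>r. c * \<bar>r - s\<bar> ^ k) has_integral (c * (s - t) ^ Suc k / Suc k)) {t..s}"
    by (subst has_integral_cong[where g="\<lambda>r. c * (s - r) ^ k"]) auto
  then have "integral {t..s} (\<lambda>r. c * \<bar>r - s\<bar> ^ k) = c * (s - t) ^ Suc k / Suc k"
    by (rule integral_unique)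
  then show ?thesis using False by (simp del: integral_mult_right)
qed

primrec picit :: "real \<Rightarrow> ('a::euclidean_space \<Rightarrow>\<^sub>L 'a) \<Rightarrow> (real \<Rightarrow> ('a \<Rightarrow>\<^sub>L 'a) \<Rightarrow> ('a \<Rightarrow>\<^sub>L 'a))
    \<Rightarrow> nat \<Rightarrow> real \<Rightarrow> ('a \<Rightarrow>\<^sub>L 'a)" where
  "picit s0 S0 F 0 = (\<lambda>t. S0)"
| "picit s0 S0 F (Suc n) = (\<lambda>t. Blinfun (\<lambda>x. S0 x + ival s0 t (\<lambda>r. F r (picit s0 S0 F n r) x)))"

lemma lip_cont:
  fixes S :: "real \<Rightarrow> 'b::real_normed_vector"
  assumes "\<And>t t'. norm (S t - S t') \<le> K * \<bar>t - t'\<bar>" "0 \<le> K"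
  shows "continuous_on UNIV S"
  by (rule lipschitz_on_continuous_on[of K]) (auto intro!: lipschitz_onI simp: dist_norm assms)

lemma picard:
  fixes F :: "real \<Rightarrow> ('a::euclidean_space \<Rightarrow>\<^sub>L 'a) \<Rightarrow> ('a \<Rightarrow>\<^sub>L 'a)" and S0 :: "'a \<Rightarrow>\<^sub>L 'a"
  assumes Fb: "\<And>r M. norm (F r M) \<le> Mf"
    and FL: "\<And>r M N. norm (F r M - F r N) \<le> L * norm (M - N)" and L0: "0 \<le> L"
    and Fi: "\<And>M x c d. continuous_on UNIV M \<Longrightarrow> (\<lambda>r. F r (M r) x) integrable_on {c..d}"
  shows "\<exists>S. S s0 = S0 \<and> (\<forall>t t'. norm (S t - S t') \<le> Mf * \<bar>t - t'\<bar>) \<and>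
            (\<forall>t x. blinfun_apply (S t) x = S0 x + ival s0 t (\<lambda>r. F r (S r) x))"
proof -
  have Mf0: "0 \<le> Mf" using Fb[of 0 0] norm_ge_zero order_trans by blast
  have Fx: "norm (F r M x) \<le> Mf * norm x" for r M x
    by (meson Fb mult_right_mono norm_blinfun norm_ge_zero order_trans)
  have FLx: "norm (F r M x - F r N x) \<le> L * norm (M - N) * norm x" for r M N x
  proof -
    have "norm (F r M x - F r N x) = norm ((F r M - F r N) x)" by (simp add: blinfun.diff_left)
    also have "\<dots> \<le> norm (F r M - F r N) * norm x" by (rule norm_blinfun)
    also have "\<dots> \<le> L * norm (M - N) * norm x" by (simp add: FL mult_right_mono)
    finally show ?thesis .
  qed
  have bl: "bounded_linear (\<lambda>x. S0 x + ival s0 t (\<lambda>r. F r (M r) x))"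
    if M: "continuous_on UNIV M" for M t
  proof -
    have "linear (\<lambda>x. S0 x + ival s0 t (\<lambda>r. F r (M r) x))"
    proof (rule linearI)
      fix x y
      show "S0 (x + y) + ival s0 t (\<lambda>r. F r (M r) (x + y)) =
          S0 x + ival s0 t (\<lambda>r. F r (M r) x) + (S0 y + ival s0 t (\<lambda>r. F r (M r) y))"
        using ival_add[OF Fi[OF M, of x] Fi[OF M, of y], of s0 t]
        by (simp add: blinfun.add_right)
    next
      fix c x
      show "S0 (c *\<^sub>R x) + ival s0 t (\<lambda>r. F r (M r) (c *\<^sub>R x)) =
          c *\<^sub>R (S0 x + ival s0 t (\<lambda>r. F r (M r) x))"
        by (simp add: blinfun.scaleR_right ival_scale scaleR_add_right)
    qed
    then show ?thesis by (simp add: linear_conv_bounded_linear)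
  qed
  have app: "blinfun_apply (Blinfun (\<lambda>x. S0 x + ival s0 t (\<lambda>r. F r (M r) x))) x
      = S0 x + ival s0 t (\<lambda>r. F r (M r) x)" if M: "continuous_on UNIV M" for M t x
    by (simp add: bounded_linear_Blinfun_apply bl[OF M])
  have lipPhi: "norm (Blinfun (\<lambda>x. S0 x + ival s0 t (\<lambda>r. F r (M r) x))
       - Blinfun (\<lambda>x. S0 x + ival s0 t' (\<lambda>r. F r (M r) x))) \<le> Mf * \<bar>t - t'\<bar>"
    if M: "continuous_on UNIV M" for M t t'
  proof (rule norm_blinfun_bound)
    show "0 \<le> Mf * \<bar>t - t'\<bar>" using Mf0 by simp
    fix x :: 'a
    have "norm (ival s0 t (\<lambda>r. F r (M r) x) - ival s0 t' (\<lambda>r. F r (M r) x)) \<le> (Mf * norm x) * \<bar>t - t'\<bar>"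
      by (rule ival_lip[OF Fi[OF M] Fx])
    then show "norm (blinfun_apply (Blinfun (\<lambda>x. S0 x + ival s0 t (\<lambda>r. F r (M r) x))
       - Blinfun (\<lambda>x. S0 x + ival s0 t' (\<lambda>r. F r (M r) x))) x) \<le> Mf * \<bar>t - t'\<bar> * norm x"
      by (simp add: blinfun.diff_left app[OF M] mult_ac)
  qed
  define it where "it = picit s0 S0 F"
  have it0: "it 0 = (\<lambda>t. S0)" by (simp add: it_def)
  have lip_it: "norm (it n t - it n t') \<le> Mf * \<bar>t - t'\<bar>" and cont_it: "continuous_on UNIV (it n)"
    for n t t'
  proof -
    have "(\<forall>t t'. norm (it n t - it n t') \<le> Mf * \<bar>t - t'\<bar>) \<and> continuous_on UNIV (it n)"
    proof (induction n)
      case 0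
      then show ?case using Mf0 by (simp add: it_def)
    next
      case (Suc n)
      have l: "\<forall>t t'. norm (it (Suc n) t - it (Suc n) t') \<le> Mf * \<bar>t - t'\<bar>"
        using lipPhi[of "it n"] Suc by (simp add: it_def)
      then show ?case using lip_cont[of "it (Suc n)" Mf] Mf0 by blast
    qed
    then show "norm (it n t - it n t') \<le> Mf * \<bar>t - t'\<bar>" "continuous_on UNIV (it n)" by auto
  qed
  have it_app: "it (Suc n) t x = S0 x + ival s0 t (\<lambda>r. F r (it n r) x)" for n t x
    using app[OF cont_it[of n]] by (simp add: it_def)
  have Fi_it: "(\<lambda>r. F r (it n r) x) integrable_on {c..d}" for n x c d
    by (rule Fi[OF cont_it])
  have bound: "norm (it (Suc n) t - it n t) \<le> Mf * L ^ n * \<bar>t - s0\<bar> ^ Suc n / fact (Suc n)" for n t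
  proof (induction n arbitrary: t)
    case 0
    show ?case
    proof (rule norm_blinfun_bound)
      show "0 \<le> Mf * L ^ 0 * \<bar>t - s0\<bar> ^ Suc 0 / fact (Suc 0)" using Mf0 by simp
      fix x :: 'a
      have "norm (ival s0 t (\<lambda>r. F r (it 0 r) x)) \<le> (Mf * norm x) * \<bar>t - s0\<bar>"
        by (rule ival_bound_const[OF Fi_it Fx])
      then show "norm ((it (Suc 0) t - it 0 t) x) \<le> Mf * L ^ 0 * \<bar>t - s0\<bar> ^ Suc 0 / fact (Suc 0) * norm x"
        by (simp add: blinfun.diff_left it_app it0 mult_ac)
    qed
  next
    case (Suc n)
    show ?case
    proof (rule norm_blinfun_bound)
      show "0 \<le> Mf * L ^ Suc n * \<bar>t - s0\<bar> ^ Suc (Suc n) / fact (Suc (Suc n))" using Mf0 L0 by simp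
      fix x :: 'a
      define c where "c = L * (Mf * L ^ n / fact (Suc n)) * norm x"
      have "(it (Suc (Suc n)) t - it (Suc n) t) x
          = ival s0 t (\<lambda>r. F r (it (Suc n) r) x - F r (it n r) x)"
        by (simp add: blinfun.diff_left it_app ival_diff_fun[OF Fi_it Fi_it])
      also have "norm \<dots> \<le> integral {min s0 t..max s0 t} (\<lambda>r. c * \<bar>r - s0\<bar> ^ Suc n)"
      proof (rule ival_norm_bound)
        show "(\<lambda>r. F r (it (Suc n) r) x - F r (it n r) x) integrable_on {min s0 t..max s0 t}"
          by (intro integrable_diff Fi_it)
        show "(\<lambda>r. c * \<bar>r - s0\<bar> ^ Suc n) integrable_on {min s0 t..max s0 t}"
          by (intro integrable_continuous_interval continuous_intros)
        fix r
        have "norm (F r (it (Suc n) r) x - F r (it n r) x) \<le> L * norm (it (Suc n) r - it n r) * norm x"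
          by (rule FLx)
        also have "\<dots> \<le> L * (Mf * L ^ n * \<bar>r - s0\<bar> ^ Suc n / fact (Suc n)) * norm x"
          by (intro mult_right_mono mult_left_mono Suc.IH L0 norm_ge_zero)
        also have "\<dots> = c * \<bar>r - s0\<bar> ^ Suc n" by (simp add: c_def field_simps)
        finally show "norm (F r (it (Suc n) r) x - F r (it n r) x) \<le> c * \<bar>r - s0\<bar> ^ Suc n" .
      qed
      also have "\<dots> = c * \<bar>t - s0\<bar> ^ Suc (Suc n) / Suc (Suc n)" by (rule int_pow)
      also have "\<dots> = Mf * L ^ Suc n * \<bar>t - s0\<bar> ^ Suc (Suc n) / fact (Suc (Suc n)) * norm x"
        by (simp add: c_def field_simps fact_Suc[of "Suc n"] del: fact_Suc)
      finally show "norm ((it (Suc (Suc n)) t - it (Suc n) t) x)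
          \<le> Mf * L ^ Suc n * \<bar>t - s0\<bar> ^ Suc (Suc n) / fact (Suc (Suc n)) * norm x" .
    qed
  qed
  define d where "d k t = it (Suc k) t - it k t" for k t
  have summ: "summable (\<lambda>k. d k t)" for t
  proof (rule summable_comparison_test)
    define T where "T = \<bar>t - s0\<bar>"
    show "summable (\<lambda>k. Mf * T * (inverse (fact k) * (L * T) ^ k))"
      by (intro summable_mult summable_exp)
    show "\<exists>N. \<forall>k\<ge>N. norm (d k t) \<le> Mf * T * (inverse (fact k) * (L * T) ^ k)"
    proof (intro exI allI impI)
      fix k :: nat
      have "norm (d k t) \<le> Mf * L ^ k * T ^ Suc k / fact (Suc k)"
        using bound by (simp add: d_def T_def)
      also have "\<dots> \<le> Mf * L ^ k * T ^ Suc k / fact k"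
        using Mf0 L0 by (intro divide_left_mono fact_mono) (auto simp: T_def)
      also have "\<dots> = Mf * T * (inverse (fact k) * (L * T) ^ k)"
        by (simp add: field_simps power_mult_distrib)
      finally show "norm (d k t) \<le> Mf * T * (inverse (fact k) * (L * T) ^ k)" .
    qed
  qed
  define Sol where "Sol t = S0 + suminf (\<lambda>k. d k t)" for t
  have conv: "(\<lambda>n. it n t) \<longlonglongrightarrow> Sol t" for t
  proof -
    have "it n t = S0 + (\<Sum>k<n. d k t)" for n
      using sum_lessThan_telescope[of "\<lambda>k. it k t" n] by (simp add: d_def it0)
    then show ?thesis
      unfolding Sol_def using summable_LIMSEQ[OF summ[of t]]
      by (simp add: tendsto_add)
  qed
  have Sol0: "Sol s0 = S0"
  proof -
    have "d k s0 = 0" for k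
      by (cases k) (auto simp: d_def it_def blinfun_apply_inverse intro!: blinfun_eqI simp: bounded_linear_Blinfun_apply
          bl[OF cont_it[unfolded it_def]])
    then show ?thesis by (simp add: Sol_def)
  qed
  have lipS: "norm (Sol t - Sol t') \<le> Mf * \<bar>t - t'\<bar>" for t t'
  proof (rule LIMSEQ_le_const2)
    show "(\<lambda>n. norm (it n t - it n t')) \<longlonglongrightarrow> norm (Sol t - Sol t')"
      by (intro tendsto_intros conv)
  qed (use lip_it in auto)
  have contS: "continuous_on UNIV Sol" by (rule lip_cont[OF lipS Mf0])
  have eq: "Sol t x = S0 x + ival s0 t (\<lambda>r. F r (Sol r) x)" for t x
  proof -
    have A: "(\<lambda>n. it (Suc n) t x) \<longlonglongrightarrow> Sol t x"
      using LIMSEQ_Suc[OF conv[of t]] by (intro blinfun.tendsto tendsto_const)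
    have pw: "(\<lambda>n. F r (it n r) x) \<longlonglongrightarrow> F r (Sol r) x" for r
    proof -
      have "(\<lambda>n. F r (it n r) - F r (Sol r)) \<longlonglongrightarrow> 0"
      proof (rule Lim_null_comparison[where g="\<lambda>n. L * norm (it n r - Sol r)"])
        show "\<forall>\<^sub>F n in sequentially. norm (F r (it n r) - F r (Sol r)) \<le> L * norm (it n r - Sol r)"
          using FL by auto
        have "(\<lambda>n. it n r - Sol r) \<longlonglongrightarrow> 0" using conv[of r] by (rule LIM_zero)
        then show "(\<lambda>n. L * norm (it n r - Sol r)) \<longlonglongrightarrow> 0"
          by (intro tendsto_mult_right_zero tendsto_norm_zero)
      qed
      then have "(\<lambda>n. F r (it n r)) \<longlonglongrightarrow> F r (Sol r)" by (rule LIM_zero_cancel)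
      then show ?thesis by (intro blinfun.tendsto tendsto_const)
    qed
    have I: "(\<lambda>n. integral {a..b} (\<lambda>r. F r (it n r) x)) \<longlonglongrightarrow> integral {a..b} (\<lambda>r. F r (Sol r) x)" for a b
      by (rule dominated_convergence(2)[where h="\<lambda>r. Mf * norm x"]) (auto intro: Fi_it Fx pw)
    have "(\<lambda>n. ival s0 t (\<lambda>r. F r (it n r) x)) \<longlonglongrightarrow> ival s0 t (\<lambda>r. F r (Sol r) x)"
      unfolding ival_def by (cases "s0 \<le> t") (auto intro: I tendsto_minus)
    then have "(\<lambda>n. it (Suc n) t x) \<longlonglongrightarrow> S0 x + ival s0 t (\<lambda>r. F r (Sol r) x)"
      unfolding it_app by (intro tendsto_add tendsto_const)
    with A show ?thesis by (rule LIMSEQ_unique)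
  qed
  show ?thesis using Sol0 lipS eq by blast
qed

lemma ival_has_integral:
  fixes f :: "real \<Rightarrow> 'b::euclidean_space"
  assumes eq: "\<And>t. S t = S0 + ival s0 t f" and f: "\<And>c d. f integrable_on {c..d}" and ab: "a \<le> b"
  shows "(f has_integral (S b - S a)) {a..b}"
proof -
  have "S b - S a = ival s0 b f - ival s0 a f" using eq by simp
  also have "\<dots> = integral {a..b} f" by (rule ival_diff[OF f ab])
  finally show ?thesis using f by (simp add: integrable_integral)
qed

lemma step_interval:
  fixes J :: "real set"
  assumes J: "is_interval J" and s0: "s0 \<in> J" and P0: "P s0" and d: "0 < \<delta>"
    and st: "\<And>t r. t \<in> J \<Longrightarrow> r \<in> J \<Longrightarrow> P t \<Longrightarrow> \<bar>r - t\<bar> \<le> \<delta> \<Longrightarrow> P r"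
  shows "\<And>r. r \<in> J \<Longrightarrow> P r"
proof -
  have *: "\<forall>r\<in>J. \<bar>r - s0\<bar> \<le> real n * \<delta> \<longrightarrow> P r" for n
  proof (induction n)
    case 0
    then show ?case using P0 by auto
  next
    case (Suc n)
    show ?case
    proof (intro ballI impI)
      fix r assume r: "r \<in> J" and le: "\<bar>r - s0\<bar> \<le> real (Suc n) * \<delta>"
      show "P r"
      proof (cases "\<bar>r - s0\<bar> \<le> \<delta>")
        case True
        then show ?thesis using st[OF s0 r P0] by simp
      next
        case False
        define r' where "r' = (if s0 \<le> r then r - \<delta> else r + \<delta>)"
        have r'J: "r' \<in> J"
        proof (cases "s0 \<le> r")
          case True
          then have "s0 \<le> r'" "r' \<le> r" using False d by (auto simp: r'_def)
          then show ?thesis using J s0 r unfolding is_interval_1 by blast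
        next
          case F2: False
          then have "r \<le> r'" "r' \<le> s0" using False d by (auto simp: r'_def)
          then show ?thesis using J s0 r unfolding is_interval_1 by blast
        qed
        have "\<bar>r' - s0\<bar> \<le> real n * \<delta>" using le False d
          by (cases "s0 \<le> r") (auto simp: r'_def algebra_simps abs_if split: if_splits)
        then have "P r'" using Suc r'J by blast
        moreover have "\<bar>r - r'\<bar> \<le> \<delta>" using d by (auto simp: r'_def)
        ultimately show ?thesis using st[OF r'J r] by blast
      qed
    qed
  qed
  fix r assume r: "r \<in> J"
  obtain n where "\<bar>r - s0\<bar> / \<delta> \<le> real n" using real_arch_simple by blast
  then have "\<bar>r - s0\<bar> \<le> real n * \<delta>" using d by (simp add: field_simps)
  then show "P r" using * r by blast
qed

lemma uniq:
  fixes F :: "real \<Rightarrow> ('a::euclidean_space \<Rightarrow>\<^sub>L 'a) \<Rightarrow> ('a \<Rightarrow>\<^sub>L 'a)"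
    and Sa Sb :: "real \<Rightarrow> ('a \<Rightarrow>\<^sub>L 'a)"
  assumes FL: "\<And>r M N. norm (F r M - F r N) \<le> L * norm (M - N)" and L0: "0 \<le> L"
    and J: "is_interval J" and s0: "s0 \<in> J" and e0: "Sa s0 = Sb s0"
    and D: "\<And>t. t \<in> J \<Longrightarrow> norm (Sa t - Sb t) \<le> D"
    and eq1: "\<And>a b x. a \<in> J \<Longrightarrow> b \<in> J \<Longrightarrow> a \<le> b \<Longrightarrow>
        ((\<lambda>r. blinfun_apply (F r (Sa r)) x) has_integral (Sa b x - Sa a x)) {a..b}"
    and eq2: "\<And>a b x. a \<in> J \<Longrightarrow> b \<in> J \<Longrightarrow> a \<le> b \<Longrightarrow>
        ((\<lambda>r. blinfun_apply (F r (Sb r)) x) has_integral (Sb b x - Sb a x)) {a..b}"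
  shows "\<And>t. t \<in> J \<Longrightarrow> Sa t = Sb t"
proof -
  have D0: "0 \<le> D" using D[OF s0] norm_ge_zero order_trans by blast
  define \<delta> where "\<delta> = 1 / (2 * (L + 1))"
  have d0: "0 < \<delta>" using L0 by (simp add: \<delta>_def)
  have dL: "\<delta> * L \<le> 1 / 2" using L0 by (simp add: \<delta>_def field_simps)
  have STEP: "Sa r = Sb r" if tJ: "t \<in> J" and rJ: "r \<in> J" and et: "Sa t = Sb t" and rt: "\<bar>r - t\<bar> \<le> \<delta>" for t r
  proof -
    have bnd: "\<forall>q\<in>J. \<bar>q - t\<bar> \<le> \<delta> \<longrightarrow> norm (Sa q - Sb q) \<le> D / 2 ^ n" for n
    proof (induction n)
      case 0
      then show ?case using D by simp
    next
      case (Suc n)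
      show ?case
      proof (intro ballI impI)
        fix q assume qJ: "q \<in> J" and qt: "\<bar>q - t\<bar> \<le> \<delta>"
        have inJ: "z \<in> J" if "min t q \<le> z" "z \<le> max t q" for z
        proof (cases "t \<le> q")
          case True
          then show ?thesis using J tJ qJ that unfolding is_interval_1 by (metis max_def min_def)
        next
          case False
          then show ?thesis using J tJ qJ that unfolding is_interval_1 by (metis max_def min_def)
        qed
        have pt: "norm (blinfun_apply (F z (Sa z)) x - blinfun_apply (F z (Sb z)) x) \<le> (L * (D / 2 ^ n) * norm x)"
          if "min t q \<le> z" "z \<le> max t q" for z x
        proof -
          have zJ: "z \<in> J" by (rule inJ[OF that])
          have zt: "\<bar>z - t\<bar> \<le> \<delta>" using that qt by (auto simp: min_def max_def split: if_splits)
          have "norm (blinfun_apply (F z (Sa z)) x - blinfun_apply (F z (Sb z)) x)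
              = norm ((F z (Sa z) - F z (Sb z)) x)" by (simp add: blinfun.diff_left)
          also have "\<dots> \<le> norm (F z (Sa z) - F z (Sb z)) * norm x" by (rule norm_blinfun)
          also have "\<dots> \<le> L * norm (Sa z - Sb z) * norm x" by (intro mult_right_mono FL norm_ge_zero)
          also have "\<dots> \<le> L * (D / 2 ^ n) * norm x"
            using Suc zJ zt L0 by (intro mult_right_mono mult_left_mono norm_ge_zero) auto
          finally show ?thesis .
        qed
        have "norm (Sa q - Sb q) \<le> \<delta> * (L * (D / 2 ^ n))"
        proof (rule norm_blinfun_bound)
          show "0 \<le> \<delta> * (L * (D / 2 ^ n))" using d0 L0 D0 by simp
          fix x :: 'a
          have "norm ((Sa q - Sb q) x) \<le> (L * (D / 2 ^ n) * norm x) * (max t q - min t q)"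
          proof (cases "t \<le> q")
            case True
            have "((\<lambda>r. blinfun_apply (F r (Sa r)) x - blinfun_apply (F r (Sb r)) x) has_integral
                 ((Sa q x - Sa t x) - (Sb q x - Sb t x))) {t..q}"
              by (intro has_integral_diff eq1 eq2 tJ qJ True)
            note I1 = this
            have "norm ((Sa q x - Sa t x) - (Sb q x - Sb t x)) \<le> (L * (D / 2 ^ n) * norm x) * Henstock_Kurzweil_Integration.content {t..q}"
            proof (rule has_integral_bound_real[where S="{}", OF _ _ I1])
              show "0 \<le> L * (D / 2 ^ n) * norm x" using L0 D0 by simp
              fix z assume "z \<in> {t..q} - {}"
              then show "norm (blinfun_apply (F z (Sa z)) x - blinfun_apply (F z (Sb z)) x) \<le> L * (D / 2 ^ n) * norm x"
                using pt[of z x] True by simp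
            qed simp
            then show ?thesis using True et by (simp add: blinfun.diff_left content_real)
          next
            case False
            have "((\<lambda>r. blinfun_apply (F r (Sa r)) x - blinfun_apply (F r (Sb r)) x) has_integral
                 ((Sa t x - Sa q x) - (Sb t x - Sb q x))) {q..t}"
              using False by (intro has_integral_diff eq1 eq2 tJ qJ) auto
            note I1 = this
            have "norm ((Sa t x - Sa q x) - (Sb t x - Sb q x)) \<le> (L * (D / 2 ^ n) * norm x) * Henstock_Kurzweil_Integration.content {q..t}"
            proof (rule has_integral_bound_real[where S="{}", OF _ _ I1])
              show "0 \<le> L * (D / 2 ^ n) * norm x" using L0 D0 by simp
              fix z assume "z \<in> {q..t} - {}"
              then show "norm (blinfun_apply (F z (Sa z)) x - blinfun_apply (F z (Sb z)) x) \<le> L * (D / 2 ^ n) * norm x"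
                using pt[of z x] False by simp
            qed simp
            then show ?thesis using False et by (simp add: blinfun.diff_left norm_minus_commute algebra_simps content_real)
          qed
          also have "\<dots> \<le> (L * (D / 2 ^ n) * norm x) * \<delta>"
            using qt L0 D0 by (intro mult_left_mono) (auto simp: min_def max_def)
          finally show "norm ((Sa q - Sb q) x) \<le> \<delta> * (L * (D / 2 ^ n)) * norm x"
            by (simp add: mult_ac)
        qed
        also have "\<dots> = (\<delta> * L) * (D / 2 ^ n)" by simp
        also have "\<dots> \<le> (1/2) * (D / 2 ^ n)" using dL D0 by (intro mult_right_mono) auto
        also have "\<dots> = D / 2 ^ Suc n" by simp
        finally show "norm (Sa q - Sb q) \<le> D / 2 ^ Suc n" .
      qed
    qed
    have "norm (Sa r - Sb r) \<le> 0"
    proof (rule LIMSEQ_le_const)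
      show "(\<lambda>n. D / 2 ^ n) \<longlonglongrightarrow> 0" by (intro LIMSEQ_divide_realpow_zero) auto
    qed (use bnd rJ rt in auto)
    then show "Sa r = Sb r" by simp
  qed
  show "\<And>t. t \<in> J \<Longrightarrow> Sa t = Sb t"
    by (rule step_interval[of J s0 "\<lambda>t. Sa t = Sb t" \<delta>, OF J s0 e0 d0 STEP]) auto
qed

locale nnr =
  fixes B :: "'g::euclidean_space \<Rightarrow> 'g \<Rightarrow> real"
    and br :: "'g \<Rightarrow> 'g \<Rightarrow> 'g"
    and h :: "'g set"
    and u :: "real \<Rightarrow> 'g"
  assumes la: "lie_algebra br"
    and inv: "invariant_form B br"
    and sub: "lie_subalgebra h br"
    and pos: "\<forall>x\<in>pcomp B h. x \<noteq> 0 \<longrightarrow> B x x > 0"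
    and up: "\<forall>t. u t \<in> pcomp B h"
    and ub: "bounded (range u)"
    and um: "u \<in> borel_measurable lebesgue"
begin

abbreviation "p \<equiv> pcomp B h"
abbreviation "P \<equiv> prp B h"

lemma Bbil: "bilinear B" using inv by (simp add: invariant_form_def)
lemma Bsym: "B x y = B y x" using inv by (simp add: invariant_form_def)
lemma Bnd: "(\<And>y. B x y = 0) \<Longrightarrow> x = 0" using inv by (auto simp: invariant_form_def)
lemma Binv: "B (br x y) z + B y (br x z) = 0" using inv unfolding invariant_form_def by blast
lemma brbil: "bilinear br" using la by (simp add: lie_algebra_def)
lemma hsub: "subspace h" using sub by (simp add: lie_subalgebra_def)

lemma B_lin_l: "linear (\<lambda>x. B x y)" using Bbil by (simp add: bilinear_def)
lemma B_lin_r: "linear (\<lambda>y. B x y)" using Bbil by (simp add: bilinear_def)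

lemma psub: "subspace p"
  unfolding subspace_def pcomp_def
  using Bbil by (auto simp: bilinear_ladd bilinear_lmul bilinear_lzero)

lemma hp0: "x \<in> h \<Longrightarrow> x \<in> p \<Longrightarrow> x = 0"
proof (rule ccontr)
  assume a: "x \<in> h" "x \<in> p" "x \<noteq> 0"
  then have "B x x > 0" using pos by blast
  moreover have "B x x = 0" using a(1,2) unfolding pcomp_def by blast
  ultimately show False by simp
qed

lemma decomp: "\<exists>y. y \<in> p \<and> x - y \<in> h"
proof -
  define T where "T z = (\<Sum>b\<in>Basis. B z b *\<^sub>R b)" for z
  have Tinner: "inner (T z) y = B z y" for z y
  proof -
    have "B z y = B z (\<Sum>b\<in>Basis. (y \<bullet> b) *\<^sub>R b)" by (simp add: euclidean_representation)
    also have "\<dots> = (\<Sum>b\<in>Basis. (y \<bullet> b) * B z b)"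
      using B_lin_r[of z] by (simp add: linear_sum linear_scale)
    also have "\<dots> = inner (T z) y" by (simp add: T_def inner_sum_left inner_sum_right inner_commute mult.commute)
    finally show ?thesis by simp
  qed
  have Tlin: "linear T"
  proof (rule linearI)
    fix x y show "T (x + y) = T x + T y"
      using Bbil by (simp add: T_def bilinear_ladd scaleR_add_left sum.distrib)
  next
    fix c x show "T (c *\<^sub>R x) = c *\<^sub>R T x"
      using Bbil by (simp add: T_def bilinear_lmul scaleR_sum_right)
  qed
  have Tinj: "inj T"
    unfolding linear_inj_iff_eq_0[OF Tlin]
  proof (intro allI impI)
    fix z assume "T z = 0"
    then have "B z y = 0" for y using Tinner[of z y] by simp
    then show "z = 0" by (rule Bnd)
  qed
  have peq1: "y \<in> p \<longleftrightarrow> (\<forall>z\<in>h. orthogonal (T z) y)" for y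
    by (simp add: pcomp_def orthogonal_def Tinner Bsym[of _ y])
  have peq: "p = {y \<in> UNIV. \<forall>z \<in> T ` h. orthogonal z y}"
    using peq1 by blast
  have "dim {y \<in> UNIV. \<forall>z \<in> T ` h. orthogonal z y} + dim (T ` h) = dim (UNIV :: 'g set)"
    by (rule dim_subspace_orthogonal_to_vectors) (simp_all add: linear_subspace_image[OF Tlin hsub])
  moreover have "dim (T ` h) = dim h"
    by (rule dim_image_eq[OF Tlin]) (use Tinj in \<open>auto simp: inj_on_def inj_def\<close>)
  ultimately have dsum: "dim p + dim h = DIM('g)" using peq by simp
  have "h \<inter> p \<subseteq> {0}" using hp0 by auto
  then have d0: "dim (h \<inter> p) = 0" by (simp add: dim_eq_0)
  have "dim {a + y |a y. a \<in> h \<and> y \<in> p} = DIM('g)"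
    using dim_sums_Int[OF hsub psub] dsum d0 by linarith
  then have sp: "span {a + y |a y. a \<in> h \<and> y \<in> p} = UNIV" by (simp add: dim_eq_full)
  have "subspace {a + y |a y. a \<in> h \<and> y \<in> p}" by (rule subspace_sums[OF hsub psub])
  then have "span {a + y |a y. a \<in> h \<and> y \<in> p} = {a + y |a y. a \<in> h \<and> y \<in> p}"
    by (simp only: span_eq_iff)
  with sp have "{a + y |a y. a \<in> h \<and> y \<in> p} = UNIV" by simp
  then obtain a y where "a \<in> h" "y \<in> p" "x = a + y" by blast
  then show ?thesis by (intro exI[of _ y]) auto
qed

lemma decomp_unique: "y1 \<in> p \<Longrightarrow> x - y1 \<in> h \<Longrightarrow> y2 \<in> p \<Longrightarrow> x - y2 \<in> h \<Longrightarrow> y1 = y2"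
proof -
  assume a: "y1 \<in> p" "x - y1 \<in> h" "y2 \<in> p" "x - y2 \<in> h"
  have "y2 - y1 = (x - y1) - (x - y2)" by simp
  then have "y2 - y1 \<in> h" using a hsub by (metis subspace_diff)
  moreover have "y2 - y1 \<in> p" using a psub by (simp add: subspace_diff)
  ultimately have "y2 - y1 = 0" by (rule hp0)
  then show "y1 = y2" by simp
qed

lemma P_mem: "P x \<in> p" and P_h: "x - P x \<in> h"
proof -
  have "\<exists>!y. y \<in> p \<and> x - y \<in> h"
  proof -
    obtain y where "y \<in> p \<and> x - y \<in> h" using decomp by blast
    then show ?thesis using decomp_unique by (intro ex1I[of _ y]) auto
  qed
  then have "P x \<in> p \<and> x - P x \<in> h" unfolding prp_def by (rule theI')
  then show "P x \<in> p" "x - P x \<in> h" by auto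
qed

lemma P_eq: "y \<in> p \<Longrightarrow> x - y \<in> h \<Longrightarrow> P x = y"
  using decomp_unique[OF _ _ P_mem P_h] by blast

lemma P_id: "x \<in> p \<Longrightarrow> P x = x"
  by (rule P_eq) (auto simp: subspace_0[OF hsub])

lemma P_zero: "x \<in> h \<Longrightarrow> P x = 0"
  by (rule P_eq) (auto simp: subspace_0[OF psub])

lemma P_lin: "linear P"
proof (rule linearI)
  fix x y
  show "P (x + y) = P x + P y"
  proof (rule P_eq)
    show "P x + P y \<in> p" using psub P_mem by (simp add: subspace_add)
    have "x + y - (P x + P y) = (x - P x) + (y - P y)" by simp
    then show "x + y - (P x + P y) \<in> h" using hsub P_h by (metis subspace_add)
  qed
next
  fix c x
  show "P (c *\<^sub>R x) = c *\<^sub>R P x"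
  proof (rule P_eq)
    show "c *\<^sub>R P x \<in> p" using psub P_mem by (simp add: subspace_scale)
    have "c *\<^sub>R x - c *\<^sub>R P x = c *\<^sub>R (x - P x)" by (simp add: algebra_simps)
    then show "c *\<^sub>R x - c *\<^sub>R P x \<in> h" using hsub P_h by (metis subspace_scale)
  qed
qed

lemma P_bl: "bounded_linear P" using P_lin by (simp add: linear_conv_bounded_linear)

lemma B_P: "w \<in> p \<Longrightarrow> B (P z) w = B z w"
proof -
  assume w: "w \<in> p"
  have "B w (z - P z) = 0" using w P_h[of z] by (simp add: pcomp_def)
  then have "B (z - P z) w = 0" by (simp add: Bsym)
  then show ?thesis using Bbil by (simp add: bilinear_lsub)
qed

lemma B_P2: "w \<in> p \<Longrightarrow> B w (P z) = B w z"
  using B_P by (simp add: Bsym)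

lemma mem_p: "x \<in> p \<longleftrightarrow> (\<forall>y\<in>h. B x y = 0)" by (simp add: pcomp_def)

end

definition clip :: "real \<Rightarrow> 'a::real_normed_vector \<Rightarrow> 'a" where
  "clip R M = (if norm M \<le> R then M else (R / norm M) *\<^sub>R M)"

lemma clip_norm: "0 \<le> R \<Longrightarrow> norm (clip R M) \<le> R"
  by (auto simp: clip_def)

lemma clip_id: "norm M \<le> R \<Longrightarrow> clip R M = M"
  by (simp add: clip_def)

lemma clip_lip:
  fixes M N :: "'a::real_normed_vector"
  assumes R: "0 \<le> R"
  shows "norm (clip R M - clip R N) \<le> 2 * norm (M - N)"
proof -
  have half: "norm ((R / norm M) *\<^sub>R M - N) \<le> 2 * norm (M - N)"
    if M: "norm M > R" and N: "norm N \<le> R" for M N :: 'a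
  proof -
    have Mp: "norm M > 0" using M R by linarith
    have "(R / norm M) *\<^sub>R M - M = (R / norm M - 1) *\<^sub>R M" by (simp add: algebra_simps)
    then have "norm ((R / norm M) *\<^sub>R M - M) = \<bar>R / norm M - 1\<bar> * norm M" by simp
    also have "\<dots> = norm M - R" using Mp M by (simp add: abs_if field_simps)
    also have "\<dots> \<le> norm (M - N)" using N norm_triangle_ineq2[of M N] by linarith
    finally have a: "norm ((R / norm M) *\<^sub>R M - M) \<le> norm (M - N)" .
    have "norm ((R / norm M) *\<^sub>R M - N) \<le> norm ((R / norm M) *\<^sub>R M - M) + norm (M - N)"
      using norm_triangle_ineq[of "(R / norm M) *\<^sub>R M - M" "M - N"] by simp
    then show ?thesis using a by linarith
  qed
  show ?thesis
  proof (cases "norm M \<le> R")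
    case True
    note TM = True
    show ?thesis
    proof (cases "norm N \<le> R")
      case True
      then show ?thesis using TM by (simp add: clip_def)
    next
      case False
      have "norm ((R / norm N) *\<^sub>R N - M) \<le> 2 * norm (N - M)" using half[of N M] False TM by simp
      then show ?thesis using TM False by (simp add: clip_def norm_minus_commute)
    qed
  next
    case False
    note FM = False
    show ?thesis
    proof (cases "norm N \<le> R")
      case True
      then show ?thesis using half[of M N] FM by (simp add: clip_def)
    next
      case False
      have Mp: "norm M > 0" "norm N > 0" using FM False R by linarith+
      define a where "a = R / norm M"
      define b where "b = R / norm N"
      have a1: "0 \<le> a" "a \<le> 1" using Mp FM R by (auto simp: a_def field_simps)
      have "norm (a *\<^sub>R M - b *\<^sub>R N) \<le> norm (a *\<^sub>R M - a *\<^sub>R N) + norm (a *\<^sub>R N - b *\<^sub>R N)"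
        using norm_triangle_ineq[of "a *\<^sub>R M - a *\<^sub>R N" "a *\<^sub>R N - b *\<^sub>R N"] by simp
      also have "norm (a *\<^sub>R M - a *\<^sub>R N) = a * norm (M - N)"
        using a1 by (simp flip: scaleR_diff_right)
      also have "norm (a *\<^sub>R N - b *\<^sub>R N) = \<bar>a - b\<bar> * norm N"
        by (simp flip: scaleR_diff_left)
      also have "\<bar>a - b\<bar> * norm N = a * \<bar>norm N - norm M\<bar>"
      proof -
        have e: "(a - b) * norm N = a * (norm N - norm M)" using Mp by (simp add: a_def b_def field_simps)
        have "\<bar>a - b\<bar> * norm N = \<bar>(a - b) * norm N\<bar>" by (simp add: abs_mult)
        also have "\<dots> = a * \<bar>norm N - norm M\<bar>" using a1 by (simp only: e abs_mult)
        finally show ?thesis .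
      qed
      also have "a * \<bar>norm N - norm M\<bar> \<le> 1 * norm (M - N)"
        using a1 norm_triangle_ineq3[of N M] by (intro mult_mono) (auto simp: norm_minus_commute)
      also have "a * norm (M - N) \<le> 1 * norm (M - N)" using a1 by (intro mult_right_mono) auto
      finally have "norm (a *\<^sub>R M - b *\<^sub>R N) \<le> 2 * norm (M - N)" by simp
      then show ?thesis using FM False by (simp add: clip_def a_def b_def)
    qed
  qed
qed

lemma clip_cont: "0 \<le> R \<Longrightarrow> continuous_on UNIV (clip R :: 'a::real_normed_vector \<Rightarrow> 'a)"
  by (rule lipschitz_on_continuous_on[of 2]) (auto intro!: lipschitz_onI simp: dist_norm clip_lip)

lemma measurable_on_shift:
  fixes f :: "real \<Rightarrow> 'b::real_normed_vector"
  assumes f: "f measurable_on UNIV"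
  shows "(\<lambda>r. f (r + c)) measurable_on UNIV"
proof -
  obtain N g where N: "negligible N" and g: "\<And>n. continuous_on UNIV (g n)"
    and lim: "\<And>x. x \<notin> N \<Longrightarrow> (\<lambda>n. g n x) \<longlonglongrightarrow> (if x \<in> UNIV then f x else 0)"
    using f unfolding measurable_on_def by blast
  show ?thesis
    unfolding measurable_on_def
  proof (intro exI conjI allI impI)
    show "negligible ((+) (-c) ` N)" by (rule negligible_translation[OF N])
    show "continuous_on UNIV (\<lambda>r. g n (r + c))" for n
      by (rule continuous_on_compose2[OF g]) (auto intro: continuous_intros)
    fix x assume xN: "x \<notin> (+) (-c) ` N"
    have "x + c \<notin> N"
    proof
      assume "x + c \<in> N"
      then have "(-c) + (x + c) \<in> (+) (-c) ` N" by (rule imageI)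
      then show False using xN by simp
    qed
    then show "(\<lambda>n. g n (x + c)) \<longlonglongrightarrow> (if x \<in> UNIV then f (x + c) else 0)" using lim by simp
  qed
qed

context nnr
begin

definition "Kp = (SOME K. K > 0 \<and> (\<forall>x. norm (P x) \<le> norm x * K))"
definition "Kbr = (SOME K. K > 0 \<and> (\<forall>x y. norm (br x y) \<le> K * norm x * norm y))"
definition "Kb = (SOME K. K > 0 \<and> (\<forall>x y. norm (B x y) \<le> K * norm x * norm y))"
definition "U = (SOME K. K > 0 \<and> (\<forall>t. norm (u t) \<le> K))"
definition "cc = (SOME c. c > 0 \<and> (\<forall>x\<in>p. c * (norm x)\<^sup>2 \<le> B x x))"

lemma Kp: "Kp > 0" "norm (P x) \<le> Kp * norm x"
proof -
  have "\<exists>K. K > 0 \<and> (\<forall>x. norm (P x) \<le> norm x * K)" using bounded_linear.pos_bounded[OF P_bl] by blast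
  then have "Kp > 0 \<and> (\<forall>x. norm (P x) \<le> norm x * Kp)" unfolding Kp_def by (rule someI_ex)
  then show "Kp > 0" "norm (P x) \<le> Kp * norm x" by (auto simp: mult.commute)
qed

lemma Kbr: "Kbr > 0" "norm (br x y) \<le> Kbr * norm x * norm y"
proof -
  have "Kbr > 0 \<and> (\<forall>x y. norm (br x y) \<le> Kbr * norm x * norm y)"
    unfolding Kbr_def by (rule someI_ex) (rule bilinear_bounded_pos[OF brbil])
  then show "Kbr > 0" "norm (br x y) \<le> Kbr * norm x * norm y" by auto
qed

lemma Kb: "Kb > 0" "\<bar>B x y\<bar> \<le> Kb * norm x * norm y"
proof -
  have "Kb > 0 \<and> (\<forall>x y. norm (B x y) \<le> Kb * norm x * norm y)"
    unfolding Kb_def by (rule someI_ex) (rule bilinear_bounded_pos[OF Bbil])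
  then show "Kb > 0" "\<bar>B x y\<bar> \<le> Kb * norm x * norm y" by auto
qed

lemma U: "U > 0" "norm (u t) \<le> U"
proof -
  have "\<exists>K>0. \<forall>x\<in>range u. norm x \<le> K" using ub by (simp add: bounded_pos)
  then have "\<exists>K. K > 0 \<and> (\<forall>t. norm (u t) \<le> K)" by auto
  then have "U > 0 \<and> (\<forall>t. norm (u t) \<le> U)" unfolding U_def by (rule someI_ex)
  then show "U > 0" "norm (u t) \<le> U" by auto
qed

lemma B_scale: "B (a *\<^sub>R x) (a *\<^sub>R x) = a * a * B x x"
  using Bbil by (simp add: bilinear_lmul bilinear_rmul)

lemma coercive_ex: "\<exists>c. c > 0 \<and> (\<forall>x\<in>p. c * (norm x)\<^sup>2 \<le> B x x)"
proof (cases "p \<subseteq> {0}")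
  case True
  then show ?thesis using Bbil by (intro exI[of _ 1]) (auto simp: bilinear_lzero)
next
  case False
  then obtain z where z: "z \<in> p" "z \<noteq> 0" by auto
  define Sph where "Sph = sphere (0::'g) 1 \<inter> p"
  have cS: "compact Sph" unfolding Sph_def
    by (intro compact_Int_closed compact_sphere closed_subspace psub)
  have nS: "Sph \<noteq> {}"
  proof -
    have "(1 / norm z) *\<^sub>R z \<in> Sph" using z psub by (simp add: Sph_def subspace_scale)
    then show ?thesis by auto
  qed
  have ct: "continuous_on Sph (\<lambda>x. B x x)"
    by (rule bilinear_continuous_on_compose[OF continuous_on_id continuous_on_id Bbil])
  obtain x0 where x0: "x0 \<in> Sph" and mn: "\<And>y. y \<in> Sph \<Longrightarrow> B x0 x0 \<le> B y y"
    using continuous_attains_inf[OF cS nS ct] by blast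
  have c0: "B x0 x0 > 0" using x0 pos by (auto simp: Sph_def)
  show ?thesis
  proof (intro exI conjI ballI)
    show "B x0 x0 > 0" by (rule c0)
    fix x assume xp: "x \<in> p"
    show "B x0 x0 * (norm x)\<^sup>2 \<le> B x x"
    proof (cases "x = 0")
      case True
      then show ?thesis using Bbil by (simp add: bilinear_lzero)
    next
      case False
      have "(1 / norm x) *\<^sub>R x \<in> Sph" using xp False psub by (simp add: Sph_def subspace_scale)
      then have "B x0 x0 \<le> B ((1 / norm x) *\<^sub>R x) ((1 / norm x) *\<^sub>R x)" by (rule mn)
      also have "\<dots> = B x x / (norm x)\<^sup>2" by (simp add: B_scale power2_eq_square)
      finally show ?thesis using False by (simp add: field_simps)
    qed
  qed
qed

lemma cc: "cc > 0" "x \<in> p \<Longrightarrow> cc * (norm x)\<^sup>2 \<le> B x x"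
proof -
  have "cc > 0 \<and> (\<forall>x\<in>p. cc * (norm x)\<^sup>2 \<le> B x x)"
    unfolding cc_def by (rule someI_ex) (rule coercive_ex)
  then show "cc > 0" "x \<in> p \<Longrightarrow> cc * (norm x)\<^sup>2 \<le> B x x" by auto
qed

definition "K0 = Kp * sqrt (Kb / cc)"
definition "R = K0 + 1"

lemma K0: "K0 > 0" using Kp Kb cc by (simp add: K0_def)
lemma R0: "R > 0" using K0 by (simp add: R_def)

lemma Op_h: "S \<in> Op B h \<Longrightarrow> x \<in> h \<Longrightarrow> S x = 0" by (simp add: Op_def)
lemma Op_lin: "S \<in> Op B h \<Longrightarrow> linear S" by (simp add: Op_def)

lemma Op_P: "S \<in> Op B h \<Longrightarrow> S (P x) = S x"
proof -
  assume S: "S \<in> Op B h"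
  have "S (x - P x) = 0" using Op_h[OF S P_h] .
  then show ?thesis using Op_lin[OF S] by (simp add: linear_diff)
qed

lemma Op_bound: "S \<in> Op B h \<Longrightarrow> norm (S x) \<le> K0 * norm x"
proof -
  assume S: "S \<in> Op B h"
  have Sp: "S (P x) \<in> p" using S P_mem by (simp add: Op_def)
  have "cc * (norm (S x))\<^sup>2 \<le> B (S (P x)) (S (P x))" using cc(2)[OF Sp] Op_P[OF S] by simp
  also have "\<dots> = B (P x) (P x)" using S P_mem by (simp add: Op_def)
  also have "\<dots> \<le> Kb * norm (P x) * norm (P x)" using Kb(2)[of "P x" "P x"] by simp
  also have "\<dots> \<le> Kb * (Kp * norm x) * (Kp * norm x)"
    using Kb(1) Kp(2)[of x] Kp(1) by (intro mult_mono mult_left_mono) auto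
  also have "\<dots> = Kb * (Kp * norm x)\<^sup>2" by (simp only: power2_eq_square mult.assoc)
  finally have A: "cc * (norm (S x))\<^sup>2 \<le> Kb * (Kp * norm x)\<^sup>2" .
  have A2: "(norm (S x))\<^sup>2 * cc \<le> Kb * (Kp * norm x)\<^sup>2" using A by (simp only: mult.commute)
  have "(norm (S x))\<^sup>2 \<le> Kb * (Kp * norm x)\<^sup>2 / cc"
    using A2 cc(1) by (simp only: pos_le_divide_eq)
  also have "\<dots> = (K0 * norm x)\<^sup>2"
  proof -
    have sq: "(sqrt (Kb / cc))\<^sup>2 = Kb / cc" using Kb(1) cc(1) by (intro real_sqrt_pow2) simp
    have "(K0 * norm x)\<^sup>2 = Kp\<^sup>2 * (sqrt (Kb / cc))\<^sup>2 * (norm x)\<^sup>2"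
      by (simp only: K0_def power_mult_distrib)
    also have "\<dots> = Kb * (Kp * norm x)\<^sup>2 / cc" by (simp add: sq power_mult_distrib mult_ac)
    finally show ?thesis by (rule sym)
  qed
  finally have "(norm (S x))\<^sup>2 \<le> (K0 * norm x)\<^sup>2" .
  moreover have "0 \<le> K0 * norm x" using K0 by simp
  ultimately show ?thesis by (rule power2_le_imp_le)
qed

lemma Op_blinfun_norm: "blinfun_apply M \<in> Op B h \<Longrightarrow> norm M \<le> K0"
  using K0 Op_bound by (intro norm_blinfun_bound) auto

end

context nnr
begin

lemma P_add: "P (x + y) = P x + P y" using P_lin by (rule linear_add)
lemma P_scale: "P (c *\<^sub>R x) = c *\<^sub>R P x" using P_lin by (rule linear_scale)
lemma P_0: "P 0 = 0" using P_lin by (rule linear_0)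
lemma P_diff: "P (x - y) = P x - P y" using P_lin by (rule linear_diff)

lemma br_le: "norm a \<le> \<alpha> \<Longrightarrow> norm b \<le> \<beta> \<Longrightarrow> norm (br a b) \<le> Kbr * \<alpha> * \<beta>"
proof -
  assume a: "norm a \<le> \<alpha>" and b: "norm b \<le> \<beta>"
  have a0: "0 \<le> \<alpha>" using a norm_ge_zero order_trans by blast
  have "norm (br a b) \<le> Kbr * norm a * norm b" by (rule Kbr(2))
  also have "\<dots> \<le> Kbr * \<alpha> * \<beta>"
    using a b a0 Kbr(1) by (intro mult_mono mult_left_mono) auto
  finally show ?thesis .
qed

lemma P_le: "norm z \<le> \<gamma> \<Longrightarrow> norm (P z) \<le> Kp * \<gamma>"
  using Kp by (meson mult_left_mono less_eq_real_def order_trans)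

lemma app_le: "norm A \<le> \<alpha> \<Longrightarrow> norm v \<le> \<beta> \<Longrightarrow> norm (blinfun_apply A v) \<le> \<alpha> * \<beta>"
  by (meson mult_mono norm_blinfun norm_ge_zero order_trans)

definition Fc :: "real \<Rightarrow> real \<Rightarrow> ('g \<Rightarrow>\<^sub>L 'g) \<Rightarrow> ('g \<Rightarrow>\<^sub>L 'g)" where
  "Fc c r M = Blinfun (\<lambda>x. -(1/2) *\<^sub>R P (br (blinfun_apply (clip R M) (u (r + c)))
                                          (blinfun_apply (clip R M) (P x))))"

lemma G_bl: "bounded_linear (\<lambda>x. -(1/2) *\<^sub>R P (br (blinfun_apply A v) (blinfun_apply A (P x))))"
proof -
  have "linear (\<lambda>x. -(1/2) *\<^sub>R P (br (blinfun_apply A v) (blinfun_apply A (P x))))"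
  proof (rule linearI)
    fix x y
    show "-(1/2) *\<^sub>R P (br (blinfun_apply A v) (blinfun_apply A (P (x + y)))) =
        -(1/2) *\<^sub>R P (br (blinfun_apply A v) (blinfun_apply A (P x))) +
        -(1/2) *\<^sub>R P (br (blinfun_apply A v) (blinfun_apply A (P y)))"
      by (simp add: P_add blinfun.add_right bilinear_radd[OF brbil] scaleR_add_right)
  next
    fix c x
    show "-(1/2) *\<^sub>R P (br (blinfun_apply A v) (blinfun_apply A (P (c *\<^sub>R x)))) =
        c *\<^sub>R (-(1/2) *\<^sub>R P (br (blinfun_apply A v) (blinfun_apply A (P x))))"
      by (simp add: P_scale blinfun.scaleR_right bilinear_rmul[OF brbil])
  qed
  then show ?thesis by (simp add: linear_conv_bounded_linear)
qed

lemma Fc_apply: "blinfun_apply (Fc c r M) x =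
    -(1/2) *\<^sub>R P (br (blinfun_apply (clip R M) (u (r + c))) (blinfun_apply (clip R M) (P x)))"
  unfolding Fc_def by (subst bounded_linear_Blinfun_apply[OF G_bl]) (rule refl)

definition "Mf = 1/2 * Kp * Kbr * R * U * R * Kp"
definition "Lc = 2 * Kp * Kbr * U * R * Kp"

lemma Mf0: "0 \<le> Mf" using Kp Kbr R0 U by (simp add: Mf_def)
lemma Lc0: "0 \<le> Lc" using Kp Kbr R0 U by (simp add: Lc_def)

lemma clipR: "norm (clip R M) \<le> R" using R0 by (simp add: clip_norm)

lemma Fc_bound: "norm (Fc c r M) \<le> Mf"
proof (rule norm_blinfun_bound[OF Mf0])
  fix x
  have a: "norm (blinfun_apply (clip R M) (u (r + c))) \<le> R * U" by (rule app_le[OF clipR U(2)])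
  have b: "norm (blinfun_apply (clip R M) (P x)) \<le> R * (Kp * norm x)"
    by (rule app_le[OF clipR P_le]) simp
  have "norm (P (br (blinfun_apply (clip R M) (u (r + c))) (blinfun_apply (clip R M) (P x))))
      \<le> Kp * (Kbr * (R * U) * (R * (Kp * norm x)))"
    by (rule P_le[OF br_le[OF a b]])
  then show "norm (blinfun_apply (Fc c r M) x) \<le> Mf * norm x"
    by (simp add: Fc_apply Mf_def mult_ac)
qed

lemma Fc_lip: "norm (Fc c r M - Fc c r N) \<le> Lc * norm (M - N)"
proof (rule norm_blinfun_bound)
  show "0 \<le> Lc * norm (M - N)" using Lc0 by simp
  fix x
  define A1 where "A1 = clip R M"
  define A2 where "A2 = clip R N"
  define v where "v = u (r + c)"
  have dA: "norm (A1 - A2) \<le> 2 * norm (M - N)" unfolding A1_def A2_def using R0 by (simp add: clip_lip)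
  have e: "blinfun_apply (Fc c r M - Fc c r N) x =
      -(1/2) *\<^sub>R P (br (blinfun_apply (A1 - A2) v) (blinfun_apply A1 (P x))
                   + br (blinfun_apply A2 v) (blinfun_apply (A1 - A2) (P x)))"
    by (simp add: blinfun.diff_left Fc_apply A1_def A2_def v_def bilinear_lsub[OF brbil]
        bilinear_rsub[OF brbil] P_add P_diff algebra_simps)
  have t1: "norm (br (blinfun_apply (A1 - A2) v) (blinfun_apply A1 (P x)))
      \<le> Kbr * (2 * norm (M - N) * U) * (R * (Kp * norm x))"
    by (intro br_le app_le dA U(2) P_le order_refl) (simp_all add: A1_def clipR v_def U(2))
  have t2: "norm (br (blinfun_apply A2 v) (blinfun_apply (A1 - A2) (P x)))
      \<le> Kbr * (R * U) * (2 * norm (M - N) * (Kp * norm x))"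
    by (intro br_le app_le dA U(2) P_le order_refl) (simp_all add: A2_def clipR v_def U(2))
  have "norm (br (blinfun_apply (A1 - A2) v) (blinfun_apply A1 (P x))
                   + br (blinfun_apply A2 v) (blinfun_apply (A1 - A2) (P x)))
      \<le> Kbr * (2 * norm (M - N) * U) * (R * (Kp * norm x)) + Kbr * (R * U) * (2 * norm (M - N) * (Kp * norm x))"
    using t1 t2 by (intro norm_triangle_le add_mono)
  then have "norm (P (br (blinfun_apply (A1 - A2) v) (blinfun_apply A1 (P x))
                   + br (blinfun_apply A2 v) (blinfun_apply (A1 - A2) (P x))))
      \<le> Kp * (Kbr * (2 * norm (M - N) * U) * (R * (Kp * norm x)) + Kbr * (R * U) * (2 * norm (M - N) * (Kp * norm x)))"
    by (rule P_le)
  then show "norm (blinfun_apply (Fc c r M - Fc c r N) x) \<le> Lc * norm (M - N) * norm x"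
    unfolding e by (simp add: Lc_def algebra_simps)
qed

lemma um_on: "u measurable_on UNIV"
  using um by (simp add: measurable_on_iff_borel_measurable lebesgue_on_UNIV_eq)

lemma Fc_int:
  assumes M: "continuous_on UNIV M"
  shows "(\<lambda>r. blinfun_apply (Fc c r (M r)) x) integrable_on {a..b}"
proof -
  define hh where "hh A v = -(1/2) *\<^sub>R P (br (blinfun_apply A v) (blinfun_apply A (P x)))"
    for A :: "'g \<Rightarrow>\<^sub>L 'g" and v
  have eqf: "(\<lambda>r. blinfun_apply (Fc c r (M r)) x) = (\<lambda>r. hh (clip R (M r)) (u (r + c)))"
    by (simp add: Fc_apply hh_def)
  have brc: "bounded_bilinear br" using brbil by (simp add: bilinear_conv_bounded_bilinear)
  have cP: "continuous_on UNIV P" using P_bl by (simp add: linear_continuous_on)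
  have chh: "continuous_on UNIV (\<lambda>z. hh (fst z) (snd z))"
    unfolding hh_def
    by (intro continuous_intros continuous_on_compose2[OF cP] bounded_bilinear.continuous_on[OF brc]) auto
  have hh0: "hh 0 0 = 0" by (simp add: hh_def bilinear_lzero[OF brbil] P_0)
  have m1: "(\<lambda>r. clip R (M r)) measurable_on UNIV"
    by (rule continuous_imp_measurable_on) (rule continuous_on_compose2[OF clip_cont[OF less_imp_le[OF R0]] M], auto)
  have m2: "(\<lambda>r. u (r + c)) measurable_on UNIV" by (rule measurable_on_shift[OF um_on])
  have mU: "(\<lambda>r. blinfun_apply (Fc c r (M r)) x) measurable_on UNIV"
    unfolding eqf by (rule measurable_on_combine[OF m1 m2 chh hh0])
  have "(\<lambda>r. if r \<in> {a..b} then blinfun_apply (Fc c r (M r)) x else 0) measurable_on UNIV"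
    by (rule measurable_on_restrict[OF mU]) simp
  then have "(\<lambda>r. blinfun_apply (Fc c r (M r)) x) measurable_on {a..b}"
    by (rule iffD1[OF measurable_on_UNIV])
  then have meas: "(\<lambda>r. blinfun_apply (Fc c r (M r)) x) \<in> borel_measurable (lebesgue_on {a..b})"
    by (simp add: measurable_on_iff_borel_measurable)
  show ?thesis
  proof (rule measurable_bounded_by_integrable_imp_integrable[OF meas])
    show "(\<lambda>r. Mf * norm x) integrable_on {a..b}" by (rule Henstock_Kurzweil_Integration.integrable_const_ivl)
    show "norm (blinfun_apply (Fc c r (M r)) x) \<le> Mf * norm x" for r
      by (meson Fc_bound mult_right_mono norm_blinfun norm_ge_zero order_trans)
  qed simp
qed

lemma Fc_h: "x \<in> h \<Longrightarrow> blinfun_apply (Fc c r M) x = 0"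
  by (simp add: Fc_apply P_zero bilinear_rzero[OF brbil] P_0)

lemma Fc_p: "blinfun_apply (Fc c r M) x \<in> p"
  unfolding Fc_apply by (rule subspace_scale[OF psub P_mem])

lemma Fc_X:
  assumes M: "blinfun_apply M \<in> Op B h" and nM: "norm M \<le> R"
  shows "blinfun_apply (Fc c r M) x = Xfield B h br u (r + c) (blinfun_apply M) x"
  using Op_P[OF M] by (simp add: Fc_apply clip_id[OF nM] Xfield_def)

end

lemma quad_deriv:
  fixes g :: "real \<Rightarrow> real"
  assumes q: "\<And>t. \<bar>g t - g s\<bar> \<le> K * (t - s)\<^sup>2"
  shows "(g has_real_derivative 0) (at s)"
  unfolding has_field_derivative_iff
proof (rule Lim_null_comparison)
  show "\<forall>\<^sub>F y in at s. norm ((g y - g s) / (y - s)) \<le> K * \<bar>y - s\<bar>"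
  proof -
    have "norm ((g y - g s) / (y - s)) \<le> K * \<bar>y - s\<bar>" if "y \<noteq> s" for y
    proof -
      have pos: "\<bar>y - s\<bar> > 0" using that by simp
      have "\<bar>g y - g s\<bar> \<le> (K * \<bar>y - s\<bar>) * \<bar>y - s\<bar>" using q[of y] by (simp add: power2_eq_square abs_mult_self_eq mult.assoc)
      then show ?thesis using pos by (simp add: abs_divide pos_divide_le_eq)
    qed
    then show ?thesis by (auto simp: eventually_at_filter)
  qed
  have "((\<lambda>y. K * \<bar>y - s\<bar>) \<longlongrightarrow> K * \<bar>s - s\<bar>) (at s)" by (intro tendsto_intros)
  then show "((\<lambda>y. K * \<bar>y - s\<bar>) \<longlongrightarrow> 0) (at s)" by simp
qed

lemma const_on_interval:
  fixes g :: "real \<Rightarrow> real"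
  assumes d: "\<And>q. q \<in> {a..b} \<Longrightarrow> (g has_real_derivative 0) (at q)"
    and x: "x \<in> {a..b}" and y: "y \<in> {a..b}"
  shows "g x = g y"
proof -
  have "\<exists>c. \<forall>z\<in>{a..b}. g z = c"
  proof (rule has_derivative_zero_constant)
    show "convex {a..b}" by simp
    fix z assume z: "z \<in> {a..b}"
    have "(g has_derivative (*) 0) (at z)" using d[OF z] by (simp add: has_field_derivative_def)
    moreover have "((*) (0::real)) = (\<lambda>h. 0)" by auto
    ultimately have "(g has_derivative (\<lambda>h. 0)) (at z)" by simp
    then show "(g has_derivative (\<lambda>h. 0)) (at z within {a..b})" by (rule has_derivative_at_withinI)
  qed
  then show ?thesis using x y by auto
qed

context nnr
begin

lemma OpI:
  assumes "\<And>x. x \<in> h \<Longrightarrow> blinfun_apply M x = 0" and "\<And>x. x \<in> p \<Longrightarrow> blinfun_apply M x \<in> p"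
    and "\<And>x y. x \<in> p \<Longrightarrow> y \<in> p \<Longrightarrow> B (blinfun_apply M x) (blinfun_apply M y) = B x y"
  shows "blinfun_apply M \<in> Op B h"
  using assms by (simp add: Op_def bounded_linear.linear[OF blinfun.bounded_linear_right])

lemma B_bl_l: "bounded_linear (\<lambda>z. B z y)"
  using B_lin_l by (simp add: linear_conv_bounded_linear)
lemma B_bl_r: "bounded_linear (\<lambda>z. B y z)"
  using B_lin_r by (simp add: linear_conv_bounded_linear)

lemma global_sol:
  assumes S0: "blinfun_apply S0 \<in> Op B h"
  shows "\<exists>Sol. Sol s0 = S0 \<and> (\<forall>t. blinfun_apply (Sol t) \<in> Op B h) \<and>
     (\<forall>a b x. a \<le> b \<longrightarrow> ((\<lambda>r. blinfun_apply (Fc c r (Sol r)) x) has_integral (Sol b x - Sol a x)) {a..b})"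
proof -
  obtain Sol where Sol0: "Sol s0 = S0" and lipS: "\<And>t t'. norm (Sol t - Sol t') \<le> Mf * \<bar>t - t'\<bar>"
    and eq: "\<And>t x. blinfun_apply (Sol t) x = S0 x + ival s0 t (\<lambda>r. Fc c r (Sol r) x)"
    using picard[OF Fc_bound Fc_lip Lc0 Fc_int, of s0 S0] by blast
  have contS: "continuous_on UNIV Sol" by (rule lip_cont[OF lipS Mf0])
  have intS: "(\<lambda>r. blinfun_apply (Fc c r (Sol r)) x) integrable_on {a..b}" for x a b
    by (rule Fc_int[OF contS])
  have hasI: "((\<lambda>r. blinfun_apply (Fc c r (Sol r)) x) has_integral (Sol b x - Sol a x)) {a..b}"
    if "a \<le> b" for a b x
    by (rule ival_has_integral[where S="\<lambda>t. Sol t x", OF eq intS that])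
  have diff: "Sol t x - Sol s x = ival s t (\<lambda>r. Fc c r (Sol r) x)" for t s x
    using ival_shift[where f="\<lambda>r. blinfun_apply (Fc c r (Sol r)) x" and s=s0 and t=t and a=s, OF intS]
    by (simp add: eq)
  have E1: "Sol t x = 0" if "x \<in> h" for t x
    using that by (simp add: eq Op_h[OF S0] Fc_h ival_zero)
  have E2: "Sol t x \<in> p" for t x
  proof -
    have "B (Sol t x) y = 0" if y: "y \<in> h" for y
    proof -
      have "S0 x \<in> p" using Op_P[OF S0, of x] P_mem[of x] S0 by (simp add: Op_def) (metis)
      then have a: "B (S0 x) y = 0" using y by (simp add: mem_p)
      have "B (ival s0 t (\<lambda>r. Fc c r (Sol r) x)) y = ival s0 t (\<lambda>r. B (Fc c r (Sol r) x) y)"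
        by (rule ival_linear[OF intS B_bl_l, symmetric])
      also have "\<dots> = 0" using Fc_p y by (intro ival_zero) (simp add: mem_p)
      finally show ?thesis using a Bbil by (simp add: eq bilinear_ladd)
    qed
    then show ?thesis by (simp add: mem_p)
  qed
  define \<delta> where "\<delta> = 1 / (Mf + 1)"
  have d0: "0 < \<delta>" using Mf0 by (simp add: \<delta>_def)
  have dM: "Mf * \<delta> \<le> 1" using Mf0 by (simp add: \<delta>_def field_simps)
  define Q where "Q t \<longleftrightarrow> (\<forall>x\<in>p. \<forall>y\<in>p. B (Sol t x) (Sol t y) = B x y)" for t
  have QOp: "Q t \<Longrightarrow> blinfun_apply (Sol t) \<in> Op B h" for t
    by (rule OpI) (auto simp: Q_def E1 E2)
  have Q0: "Q s0" using S0 by (simp add: Q_def Sol0 Op_def)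
  have quad: "\<bar>B (Sol t x) (Sol t y) - B (Sol s x) (Sol s y)\<bar>
      \<le> (2 * Kb * Kbr * R * R * U * Mf * norm x * norm y + Kb * Mf * Mf * norm x * norm y) * (t - s)\<^sup>2"
    if sR: "norm (Sol s) \<le> R" and xp: "x \<in> p" and yp: "y \<in> p" for s t x y
  proof -
    define Ss where "Ss = Sol s"
    define dx where "dx = Sol t x - Sol s x"
    define dy where "dy = Sol t y - Sol s y"
    define K1 where "K1 = 2 * Kb * Kbr * R * R * U * Mf * norm x * norm y"
    have K10: "0 \<le> K1" using Kb Kbr R0 U Mf0 by (simp add: K1_def)
    have Ssp: "Ss y \<in> p" "Ss x \<in> p" by (simp_all add: Ss_def E2)
    have clS: "clip R Ss = Ss" using sR by (simp add: Ss_def clip_id)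
    define hh where "hh r = B (Fc c r (Sol r) x) (Ss y) + B (Ss x) (Fc c r (Sol r) y)" for r
    have hh_b: "\<bar>hh r\<bar> \<le> K1 * \<bar>r - s\<bar>" for r
    proof -
      define A where "A = clip R (Sol r)"
      define v where "v = blinfun_apply A (u (r + c))"
      define D where "D = A - Ss"
      have Fx: "Fc c r (Sol r) z = -(1/2) *\<^sub>R P (br v (A z))" if "z \<in> p" for z
        using that by (simp add: Fc_apply P_id A_def v_def)
      have e1: "B (Fc c r (Sol r) x) (Ss y) = -(1/2) * B (br v (Ss x + D x)) (Ss y)"
        using Ssp by (simp add: Fx[OF xp] bilinear_lmul[OF Bbil] bilinear_lneg[OF Bbil] B_P D_def blinfun.diff_left)
      have e2: "B (Ss x) (Fc c r (Sol r) y) = -(1/2) * B (Ss x) (br v (Ss y + D y))"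
        using Ssp by (simp add: Fx[OF yp] bilinear_rmul[OF Bbil] bilinear_rneg[OF Bbil] B_P2 D_def blinfun.diff_left)
      have e3: "hh r = -(1/2) * (B (br v (D x)) (Ss y) + B (Ss x) (br v (D y)))"
      proof -
        have "B (br v (Ss x)) (Ss y) + B (Ss x) (br v (Ss y)) = 0" by (rule Binv)
        then show ?thesis
          by (simp add: hh_def e1 e2 bilinear_radd[OF brbil] bilinear_ladd[OF Bbil]
              bilinear_radd[OF Bbil] algebra_simps)
      qed
      have nD: "norm D \<le> 2 * (Mf * \<bar>r - s\<bar>)"
      proof -
        have "norm D = norm (clip R (Sol r) - clip R (Sol s))" using clS by (simp add: D_def A_def Ss_def)
        also have "\<dots> \<le> 2 * norm (Sol r - Sol s)" using R0 by (simp add: clip_lip)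
        also have "\<dots> \<le> 2 * (Mf * \<bar>r - s\<bar>)" using lipS by simp
        finally show ?thesis .
      qed
      have nv: "norm v \<le> R * U" unfolding v_def A_def by (rule app_le[OF clipR U(2)])
      have nS: "norm (Ss z) \<le> R * norm z" for z using sR by (simp add: Ss_def app_le)
      have b1: "\<bar>B (br v (D x)) (Ss y)\<bar> \<le> Kb * (Kbr * (R * U) * (2 * (Mf * \<bar>r - s\<bar>) * norm x)) * (R * norm y)"
      proof -
        have "\<bar>B (br v (D x)) (Ss y)\<bar> \<le> Kb * norm (br v (D x)) * norm (Ss y)" by (rule Kb(2))
        also have "\<dots> \<le> Kb * (Kbr * (R * U) * (2 * (Mf * \<bar>r - s\<bar>) * norm x)) * (R * norm y)"
          using Kb(1) Kbr(1) R0 U(1) Mf0 sR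
          by (intro mult_mono mult_left_mono br_le nv app_le nD nS order_refl) (auto simp: Ss_def)
        finally show ?thesis .
      qed
      have b2: "\<bar>B (Ss x) (br v (D y))\<bar> \<le> Kb * (R * norm x) * (Kbr * (R * U) * (2 * (Mf * \<bar>r - s\<bar>) * norm y))"
      proof -
        have "\<bar>B (Ss x) (br v (D y))\<bar> \<le> Kb * norm (Ss x) * norm (br v (D y))" by (rule Kb(2))
        also have "\<dots> \<le> Kb * (R * norm x) * (Kbr * (R * U) * (2 * (Mf * \<bar>r - s\<bar>) * norm y))"
          using Kb(1) Kbr(1) R0 U(1) Mf0 sR
          by (intro mult_mono mult_left_mono br_le nv app_le nD nS order_refl) (auto simp: Ss_def)
        finally show ?thesis .
      qed
      have "\<bar>hh r\<bar> = (1/2) * \<bar>B (br v (D x)) (Ss y) + B (Ss x) (br v (D y))\<bar>"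
        by (simp add: e3 abs_mult)
      also have "\<dots> \<le> (1/2) * (\<bar>B (br v (D x)) (Ss y)\<bar> + \<bar>B (Ss x) (br v (D y))\<bar>)"
        by (intro mult_left_mono abs_triangle_ineq) simp
      also have "\<dots> \<le> (1/2) * (Kb * (Kbr * (R * U) * (2 * (Mf * \<bar>r - s\<bar>) * norm x)) * (R * norm y)
          + Kb * (R * norm x) * (Kbr * (R * U) * (2 * (Mf * \<bar>r - s\<bar>) * norm y)))"
        by (intro mult_left_mono add_mono b1 b2) simp
      also have "\<dots> = K1 * \<bar>r - s\<bar>" by (simp add: K1_def algebra_simps)
      finally show ?thesis .
    qed
    have inthh: "hh integrable_on {a..b}" for a b
    proof -
      have "(\<lambda>r. B (Fc c r (Sol r) x) (Ss y)) integrable_on {a..b}"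
        using integrable_linear[OF intS B_bl_l] by (simp add: o_def)
      moreover have "(\<lambda>r. B (Ss x) (Fc c r (Sol r) y)) integrable_on {a..b}"
        using integrable_linear[OF intS B_bl_r] by (simp add: o_def)
      ultimately show ?thesis unfolding hh_def by (rule integrable_add)
    qed
    have main: "B dx (Ss y) + B (Ss x) dy = ival s t hh"
    proof -
      have "B dx (Ss y) = ival s t (\<lambda>r. B (Fc c r (Sol r) x) (Ss y))"
        unfolding dx_def diff by (rule ival_linear[OF intS B_bl_l, symmetric])
      moreover have "B (Ss x) dy = ival s t (\<lambda>r. B (Ss x) (Fc c r (Sol r) y))"
        unfolding dy_def diff by (rule ival_linear[OF intS B_bl_r, symmetric])
      moreover have "ival s t hh = ival s t (\<lambda>r. B (Fc c r (Sol r) x) (Ss y)) + ival s t (\<lambda>r. B (Ss x) (Fc c r (Sol r) y))"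
        unfolding hh_def
        by (rule ival_add) (use integrable_linear[OF intS B_bl_l] integrable_linear[OF intS B_bl_r] in \<open>simp_all add: o_def\<close>)
      ultimately show ?thesis by simp
    qed
    have mb: "\<bar>ival s t hh\<bar> \<le> (K1 * \<bar>t - s\<bar>) * \<bar>t - s\<bar>"
    proof -
      have "norm (ival s t hh) \<le> (K1 * \<bar>t - s\<bar>) * \<bar>t - s\<bar>"
      proof (rule ival_bound_const[OF inthh])
        fix r assume "r \<in> {min s t..max s t}"
        then have "\<bar>r - s\<bar> \<le> \<bar>t - s\<bar>" by (auto simp: min_def max_def split: if_splits)
        then show "norm (hh r) \<le> K1 * \<bar>t - s\<bar>" using hh_b[of r] K10
          by (simp add: order_trans[OF _ mult_left_mono])
      qed
      then show ?thesis by simp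
    qed
    have ndx: "norm dx \<le> Mf * \<bar>t - s\<bar> * norm x"
      using lipS[of t s] unfolding dx_def
      by (metis app_le blinfun.diff_left order_refl)
    have ndy: "norm dy \<le> Mf * \<bar>t - s\<bar> * norm y"
      using lipS[of t s] unfolding dy_def
      by (metis app_le blinfun.diff_left order_refl)
    have c3: "\<bar>B dx dy\<bar> \<le> Kb * (Mf * \<bar>t - s\<bar> * norm x) * (Mf * \<bar>t - s\<bar> * norm y)"
    proof -
      have "\<bar>B dx dy\<bar> \<le> Kb * norm dx * norm dy" by (rule Kb(2))
      also have "\<dots> \<le> Kb * (Mf * \<bar>t - s\<bar> * norm x) * (Mf * \<bar>t - s\<bar> * norm y)"
        using Kb(1) ndx ndy Mf0 by (intro mult_mono mult_left_mono) auto
      finally show ?thesis .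
    qed
    have split: "B (Sol t x) (Sol t y) - B (Sol s x) (Sol s y) = (B dx (Ss y) + B (Ss x) dy) + B dx dy"
    proof -
      have "Sol t x = Ss x + dx" "Sol t y = Ss y + dy" by (simp_all add: dx_def dy_def Ss_def)
      then show ?thesis
        by (simp add: Ss_def bilinear_ladd[OF Bbil] bilinear_radd[OF Bbil] algebra_simps)
    qed
    have "\<bar>B (Sol t x) (Sol t y) - B (Sol s x) (Sol s y)\<bar> \<le> \<bar>ival s t hh\<bar> + \<bar>B dx dy\<bar>"
      unfolding split main by (rule abs_triangle_ineq)
    also have "\<dots> \<le> (K1 * \<bar>t - s\<bar>) * \<bar>t - s\<bar> + Kb * (Mf * \<bar>t - s\<bar> * norm x) * (Mf * \<bar>t - s\<bar> * norm y)"
      using mb c3 by simp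
    also have "\<dots> = (K1 + Kb * Mf * Mf * norm x * norm y) * (\<bar>t - s\<bar> * \<bar>t - s\<bar>)"
      by (simp only: algebra_simps)
    also have "\<bar>t - s\<bar> * \<bar>t - s\<bar> = (t - s)\<^sup>2" by (simp add: abs_mult_self_eq power2_eq_square)
    finally show ?thesis by (simp add: K1_def)
  qed
  have step: "Q r" if "Q t" and rt: "\<bar>r - t\<bar> \<le> \<delta>" for t r
  proof -
    have nt: "norm (Sol t) \<le> K0" using Op_blinfun_norm[OF QOp[OF that(1)]] .
    have inR: "norm (Sol q) \<le> R" if "q \<in> {t - \<delta>..t + \<delta>}" for q
    proof -
      have "norm (Sol q) \<le> norm (Sol t) + norm (Sol q - Sol t)" by (rule norm_triangle_sub)
      also have "\<dots> \<le> K0 + Mf * \<bar>q - t\<bar>" using nt lipS by (intro add_mono) auto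
      also have "Mf * \<bar>q - t\<bar> \<le> Mf * \<delta>" using that Mf0 by (intro mult_left_mono) auto
      also have "K0 + Mf * \<delta> \<le> R" using dM by (simp add: R_def)
      finally show ?thesis by simp
    qed
    show "Q r"
      unfolding Q_def
    proof (intro ballI)
      fix x y assume xp: "x \<in> p" and yp: "y \<in> p"
      have "B (Sol r x) (Sol r y) = B (Sol t x) (Sol t y)"
      proof (rule const_on_interval[where g="\<lambda>q. B (Sol q x) (Sol q y)" and a="t - \<delta>" and b="t + \<delta>"])
        fix q assume "q \<in> {t - \<delta>..t + \<delta>}"
        then have nq: "norm (Sol q) \<le> R" by (rule inR)
        show "((\<lambda>q. B (Sol q x) (Sol q y)) has_real_derivative 0) (at q)"
          by (rule quad_deriv[OF quad[OF nq xp yp]])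
      qed (use rt d0 in auto)
      also have "\<dots> = B x y" using that xp yp by (simp add: Q_def)
      finally show "B (Sol r x) (Sol r y) = B x y" .
    qed
  qed
  have allQ: "Q t" for t
    by (rule step_interval[of UNIV s0 Q \<delta>, OF _ _ Q0 d0 step]) auto
  show ?thesis using Sol0 QOp[OF allQ] hasI by blast
qed

end

context nnr
begin

lemma K0R: "K0 \<le> R" by (simp add: R_def)

lemma blin_Op: "S \<in> Op B h \<Longrightarrow> blinfun_apply (Blinfun S) = S"
  using Op_lin by (simp add: bounded_linear_Blinfun_apply linear_conv_bounded_linear)

lemma curve_from_sol:
  assumes Op: "\<And>t. blinfun_apply (Sol t) \<in> Op B h"
    and eq: "\<And>a b x. a \<le> b \<Longrightarrow> ((\<lambda>r. blinfun_apply (Fc c r (Sol r)) x) has_integral (Sol b x - Sol a x)) {a..b}"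
  shows "integral_curve B h br u UNIV (\<lambda>s. s + c) (\<lambda>s. blinfun_apply (Sol s))"
  unfolding integral_curve_def
proof (intro conjI ballI impI allI)
  fix s :: real
  show "blinfun_apply (Sol s) \<in> Op B h" by (rule Op)
  show "((\<lambda>s. s + c) has_real_derivative 1) (at s)" by (auto intro!: derivative_eq_intros)
next
  fix a b :: real and x assume ab: "a \<le> b"
  have "((\<lambda>r. blinfun_apply (Fc c r (Sol r)) x) has_integral (Sol b x - Sol a x)) {a..b}" by (rule eq[OF ab])
  moreover have "blinfun_apply (Fc c r (Sol r)) x = Xfield B h br u (r + c) (blinfun_apply (Sol r)) x" for r
    using Op_blinfun_norm[OF Op] K0R by (intro Fc_X[OF Op]) (meson order_trans)
  ultimately show "((\<lambda>r. Xfield B h br u (r + c) (blinfun_apply (Sol r)) x) has_integral (Sol b x - Sol a x)) {a..b}"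
    by simp
qed

lemma complete: "complete_X B h br u"
  unfolding complete_X_def
proof (intro conjI allI impI)
  fix t0 S0 assume S0: "S0 \<in> Op B h"
  obtain Sol where Sol0: "Sol 0 = Blinfun S0" and Op: "\<And>t. blinfun_apply (Sol t) \<in> Op B h"
    and eq: "\<And>a b x. a \<le> b \<Longrightarrow> ((\<lambda>r. blinfun_apply (Fc t0 r (Sol r)) x) has_integral (Sol b x - Sol a x)) {a..b}"
    using global_sol[of "Blinfun S0" 0 t0] blin_Op[OF S0] S0 by auto
  show "\<exists>tau S. integral_curve B h br u UNIV tau S \<and> tau 0 = t0 \<and> S 0 = S0"
    by (intro exI[of _ "\<lambda>s. s + t0"] exI[of _ "\<lambda>s. blinfun_apply (Sol s)"] conjI curve_from_sol[OF Op eq])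
       (auto simp: Sol0 blin_Op[OF S0])
next
  fix J tau S
  assume "is_interval J \<and> open J \<and> J \<noteq> {} \<and> integral_curve B h br u J tau S"
  then have J: "is_interval J" and oJ: "open J" and nJ: "J \<noteq> {}" and ic: "integral_curve B h br u J tau S"
    by auto
  obtain s0 where s0: "s0 \<in> J" using nJ by auto
  have SOp: "\<And>s. s \<in> J \<Longrightarrow> S s \<in> Op B h" using ic by (simp add: integral_curve_def)
  have tauD: "\<And>s. s \<in> J \<Longrightarrow> (tau has_real_derivative 1) (at s)" using ic by (simp add: integral_curve_def)
  have icI: "\<And>a b x. a \<in> J \<Longrightarrow> b \<in> J \<Longrightarrow> a \<le> b \<Longrightarrow>
      ((\<lambda>r. Xfield B h br u (tau r) (S r) x) has_integral (S b x - S a x)) {a..b}"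
    using ic by (simp add: integral_curve_def)
  obtain k where k: "\<And>s. s \<in> J \<Longrightarrow> tau s - s = k"
  proof -
    have "\<exists>k. \<forall>s\<in>J. tau s - s = k"
    proof (rule has_derivative_zero_constant)
      show "convex J" using J by (simp add: is_interval_convex)
      fix s assume sJ: "s \<in> J"
      have "((\<lambda>s. tau s - s) has_real_derivative 1 - 1) (at s)"
        by (intro derivative_intros tauD[OF sJ])
      then have "((\<lambda>s. tau s - s) has_derivative (*) 0) (at s)" by (simp add: has_field_derivative_def)
      moreover have "((*) (0::real)) = (\<lambda>h. 0)" by auto
      ultimately have "((\<lambda>s. tau s - s) has_derivative (\<lambda>h. 0)) (at s)" by simp
      then show "((\<lambda>s. tau s - s) has_derivative (\<lambda>h. 0)) (at s within J)" by (rule has_derivative_at_withinI)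
    qed
    then show ?thesis using that by blast
  qed
  have tauk: "\<And>s. s \<in> J \<Longrightarrow> tau s = s + k" using k by (metis add.commute diff_add_cancel)
  obtain Sol where Sol0: "Sol s0 = Blinfun (S s0)" and Op: "\<And>t. blinfun_apply (Sol t) \<in> Op B h"
    and eq: "\<And>a b x. a \<le> b \<Longrightarrow> ((\<lambda>r. blinfun_apply (Fc k r (Sol r)) x) has_integral (Sol b x - Sol a x)) {a..b}"
    using global_sol[of "Blinfun (S s0)" s0 k] blin_Op[OF SOp[OF s0]] SOp[OF s0] by auto
  have Dbound: "norm (Blinfun (S t) - Sol t) \<le> 2 * K0" if tJ: "t \<in> J" for t
  proof -
    have "norm (Blinfun (S t) - Sol t) \<le> norm (Blinfun (S t)) + norm (Sol t)" by (rule norm_triangle_ineq4)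
    moreover have "norm (Blinfun (S t)) \<le> K0"
      by (rule Op_blinfun_norm) (simp add: blin_Op[OF SOp[OF tJ]] SOp[OF tJ])
    moreover have "norm (Sol t) \<le> K0" by (rule Op_blinfun_norm[OF Op[of t]])
    ultimately show ?thesis by linarith
  qed
  have eq1: "((\<lambda>r. blinfun_apply (Fc k r (Blinfun (S r))) x) has_integral
        (blinfun_apply (Blinfun (S b)) x - blinfun_apply (Blinfun (S a)) x)) {a..b}"
    if aJ: "a \<in> J" and bJ: "b \<in> J" and ab: "a \<le> b" for a b x
  proof -
    have sub: "r \<in> J" if "r \<in> {a..b}" for r
    proof -
      have "a \<le> r" "r \<le> b" using that by auto
      then show ?thesis using J aJ bJ unfolding is_interval_1 by blast
    qed
    have "((\<lambda>r. Xfield B h br u (tau r) (S r) x) has_integral (S b x - S a x)) {a..b}" by (rule icI[OF aJ bJ ab])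
    moreover have feq: "blinfun_apply (Fc k r (Blinfun (S r))) x = Xfield B h br u (tau r) (S r) x" if "r \<in> {a..b}" for r
    proof -
      have rJ: "r \<in> J" by (rule sub[OF that])
      have O: "blinfun_apply (Blinfun (S r)) \<in> Op B h" using blin_Op[OF SOp[OF rJ]] SOp[OF rJ] by simp
      have "blinfun_apply (Fc k r (Blinfun (S r))) x = Xfield B h br u (r + k) (blinfun_apply (Blinfun (S r))) x"
        using Op_blinfun_norm[OF O] K0R by (intro Fc_X[OF O]) auto
      then show ?thesis using blin_Op[OF SOp[OF rJ]] tauk[OF rJ] by simp
    qed
    ultimately have "((\<lambda>r. blinfun_apply (Fc k r (Blinfun (S r))) x) has_integral (S b x - S a x)) {a..b}"
      using has_integral_cong[of "{a..b}" "\<lambda>r. blinfun_apply (Fc k r (Blinfun (S r))) x"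
          "\<lambda>r. Xfield B h br u (tau r) (S r) x", OF feq] by blast
    then show ?thesis using blin_Op[OF SOp[OF aJ]] blin_Op[OF SOp[OF bJ]] by simp
  qed
  have eq2: "((\<lambda>r. blinfun_apply (Fc k r (Sol r)) x) has_integral (Sol b x - Sol a x)) {a..b}"
    if "a \<in> J" "b \<in> J" "a \<le> b" for a b x
    using that(3) by (rule eq)
  have same: "\<And>t. t \<in> J \<Longrightarrow> Blinfun (S t) = Sol t"
    by (rule uniq[where F="Fc k" and L=Lc and D="2 * K0" and Sa="\<lambda>s. Blinfun (S s)" and Sb=Sol,
        OF Fc_lip Lc0 J s0 Sol0[symmetric] Dbound eq1 eq2])
  show "\<exists>tau' S'. integral_curve B h br u UNIV tau' S' \<and> (\<forall>s\<in>J. tau' s = tau s \<and> S' s = S s)"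
  proof (intro exI conjI ballI)
    show "integral_curve B h br u UNIV (\<lambda>s. s + k) (\<lambda>s. blinfun_apply (Sol s))"
      by (rule curve_from_sol[OF Op eq])
    fix s assume sJ: "s \<in> J"
    show "s + k = tau s" using tauk[OF sJ] by simp
    show "blinfun_apply (Sol s) = S s" using same[OF sJ] blin_Op[OF SOp[OF sJ]] by metis
  qed
qed

end

theorem lemma4p8:
  fixes B :: "'g::euclidean_space \<Rightarrow> 'g \<Rightarrow> real"
    and br :: "'g \<Rightarrow> 'g \<Rightarrow> 'g"
    and h :: "'g set"
    and u :: "real \<Rightarrow> 'g"
  assumes "lie_algebra br"
    and "invariant_form B br"
    and "lie_subalgebra h br"
    and "\<forall>x\<in>pcomp B h. x \<noteq> 0 \<longrightarrow> B x x > 0"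
    and "\<forall>t. u t \<in> pcomp B h"
    and "bounded (range u)"
    and "u \<in> borel_measurable lebesgue"
  shows "complete_X B h br u"
proof -
  interpret nnr B br h u by (rule nnr.intro) (fact assms)+
  show ?thesis by (rule complete)
qed


end
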